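(* For any integers $W\ge6$, $L\ge2$, $s\in\mathbb{N}$ and any $\xi_i\in[0,1]$ for $i=0,1,\dots,W^2L^2-1$, there exists a ReLU network $\phi:\mathbb{R}\to\mathbb{R}$ with $$\phi\in\mathcal{NN}\big(8s(2W+1)\lceil\log_2(2W)\rceil+2,\ 4L\lceil\log_2(2L)\rceil+1\big)$$ such that $\mathrm{Lip}\,\phi\le4\cdot2^{L^2}+2L^2$, $|\phi(i)-\xi_i|\le(WL)^{-2s}$ for $i=0,1,\dots,W^2L^2-1$, and $\phi(t)\in[0,1]$ for all $t\in\mathbb{R}$.
   Context: $\sigma(x)=\max(x,0)$. $\mathcal{NN}(W,L)$: functions $\phi(x)=T_L(\sigma(T_{L-1}(\cdots\sigma(T_0(x))\cdots)))$ with affine maps $T_l$, ReLU componentwise, all hidden layer sizes $\le W$ and depth $\le L$. $\mathrm{Lip}\,\phi$ is the Lipschitz constant of $\phi$. *)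

theory Defs
  imports "HOL-Analysis.Analysis"
begin

definition relu :: "real \<Rightarrow> real" where
  "relu x = max x 0"

text \<open>An affine layer \<open>T(x) = A x + b\<close>, with the matrix \<open>A\<close> given as a list of rows
  and the bias \<open>b\<close> as a list.\<close>
type_synonym layer = "real list list \<times> real list"

definition affine :: "layer \<Rightarrow> real list \<Rightarrow> real list" where
  "affine T x = map2 (\<lambda>row bi. (\<Sum>j<length x. row ! j * x ! j) + bi) (fst T) (snd T)"

definition layer_dims :: "layer \<Rightarrow> nat \<Rightarrow> nat \<Rightarrow> bool" where
  "layer_dims T n m \<longleftrightarrow> length (fst T) = m \<and> length (snd T) = m \<and>
     (\<forall>row \<in> set (fst T). length row = n)"

fun eval_net :: "layer list \<Rightarrow> real list \<Rightarrow> real list" where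
  "eval_net [] x = x"
| "eval_net [T] x = affine T x"
| "eval_net (T # Ts) x = eval_net Ts (map relu (affine T x))"

text \<open>\<open>NN(W,L)\<close>: scalar functions \<open>\<real> \<rightarrow> \<real>\<close> realised by a ReLU network
  \<open>[T_0,\<dots>,T_k]\<close> with \<open>k \<le> L\<close> hidden layers, each of size at most \<open>W\<close>.
  \<open>ds\<close> lists the layer dimensions \<open>d_0 = 1, d_1, \<dots>, d_k, d_{k+1} = 1\<close>.\<close>
definition NN :: "nat \<Rightarrow> nat \<Rightarrow> (real \<Rightarrow> real) set" where
  "NN W L = {\<phi>. \<exists>net ds.
      net \<noteq> [] \<and> length ds = length net + 1 \<and>
      ds ! 0 = 1 \<and> ds ! length net = 1 \<and>
      (\<forall>i < length net. layer_dims (net ! i) (ds ! i) (ds ! Suc i)) \<and>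
      (\<forall>i. 1 \<le> i \<and> i < length net \<longrightarrow> ds ! i \<le> W) \<and>
      length net - 1 \<le> L \<and>
      (\<forall>t. \<phi> t = hd (eval_net net [t]))}"

end

theory Submission
  imports Defs
begin


definition aff :: "nat \<Rightarrow> nat \<Rightarrow> (nat \<Rightarrow> nat \<Rightarrow> real) \<Rightarrow> (nat \<Rightarrow> real) \<Rightarrow> real list \<Rightarrow> real list" where
  "aff n m A b x = map (\<lambda>i. (\<Sum>j<n. A i j * x ! j) + b i) [0..<m]"

definition mkL :: "nat \<Rightarrow> nat \<Rightarrow> (nat \<Rightarrow> nat \<Rightarrow> real) \<Rightarrow> (nat \<Rightarrow> real) \<Rightarrow> layer" where
  "mkL n m A b = (map (\<lambda>i. map (\<lambda>j. A i j) [0..<n]) [0..<m], map b [0..<m])"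

lemma length_aff[simp]: "length (aff n m A b x) = m"
  by (simp add: aff_def)

lemma nth_aff[simp]: "i < m \<Longrightarrow> aff n m A b x ! i = (\<Sum>j<n. A i j * x ! j) + b i"
  by (simp add: aff_def)

lemma layer_dims_mkL: "layer_dims (mkL n m A b) n m"
  by (auto simp: layer_dims_def mkL_def)

lemma affine_mkL: "length x = n \<Longrightarrow> affine (mkL n m A b) x = aff n m A b x"
  by (rule nth_equalityI) (auto simp: affine_def mkL_def aff_def)

lemma affine_as_aff:
  assumes "layer_dims T n m" "length x = n"
  shows "affine T x = aff n m (\<lambda>i j. fst T ! i ! j) (\<lambda>i. snd T ! i) x"
  using assms by (intro nth_equalityI) (auto simp: affine_def layer_dims_def)

lemma aff_comp:
  assumes "length x = n"
  shows "aff m p C d (aff n m A b x) = aff n p (\<lambda>i j. \<Sum>k<m. C i k * A k j) (\<lambda>i. (\<Sum>k<m. C i k * b k) + d i) x"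
proof (rule nth_equalityI)
  fix i assume "i < length (aff m p C d (aff n m A b x))"
  then have i: "i < p" by simp
  have e1: "(\<Sum>k<m. C i k * aff n m A b x ! k) = (\<Sum>k<m. C i k * ((\<Sum>j<n. A k j * x ! j) + b k))"
    by (rule sum.cong) auto
  have "(\<Sum>k<m. C i k * ((\<Sum>j<n. A k j * x ! j) + b k)) = (\<Sum>k<m. \<Sum>j<n. C i k * A k j * x ! j) + (\<Sum>k<m. C i k * b k)"
    by (simp add: distrib_left sum.distrib sum_distrib_left mult.assoc)
  also have "(\<Sum>k<m. \<Sum>j<n. C i k * A k j * x ! j) = (\<Sum>j<n. (\<Sum>k<m. C i k * A k j) * x ! j)"
    by (subst sum.swap) (simp add: sum_distrib_right)
  finally have e2: "(\<Sum>k<m. C i k * ((\<Sum>j<n. A k j * x ! j) + b k)) = (\<Sum>j<n. (\<Sum>k<m. C i k * A k j) * x ! j) + (\<Sum>k<m. C i k * b k)" .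
  show "aff m p C d (aff n m A b x) ! i = aff n p (\<lambda>i j. \<Sum>k<m. C i k * A k j) (\<lambda>i. (\<Sum>k<m. C i k * b k) + d i) x ! i"
    using i by (simp only: nth_aff e1 e2)
qed simp

lemma aff_append:
  "aff n m1 A1 b1 x @ aff n m2 A2 b2 x =
   aff n (m1 + m2) (\<lambda>i j. if i < m1 then A1 i j else A2 (i - m1) j) (\<lambda>i. if i < m1 then b1 i else b2 (i - m1)) x"
proof (rule nth_equalityI)
  fix i assume "i < length (aff n m1 A1 b1 x @ aff n m2 A2 b2 x)"
  then have i: "i < m1 + m2" by simp
  show "(aff n m1 A1 b1 x @ aff n m2 A2 b2 x) ! i = aff n (m1 + m2) (\<lambda>i j. if i < m1 then A1 i j else A2 (i - m1) j) (\<lambda>i. if i < m1 then b1 i else b2 (i - m1)) x ! i"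
  proof (cases "i < m1")
    case True
    then show ?thesis using i by (simp add: nth_append)
  next
    case False
    then show ?thesis using i by (simp add: nth_append)
  qed
qed simp

lemma sum_delta_nth: assumes "i < n" shows " (\<Sum>j<n. (if i = j then 1 else 0) * (x::real list) ! j) = x ! i"
proof -
  have "(\<Sum>j<n. (if i = j then 1 else 0) * (x::real list) ! j) = (\<Sum>j<n. if i = j then x ! j else 0)"
    by (rule sum.cong) auto
  also have "\<dots> = x ! i" using assms by simp
  finally show ?thesis .
qed

lemma aff_take:
  assumes "length h = w1 + w2"
  shows "take w1 h = aff (w1 + w2) w1 (\<lambda>i j. if i = j then 1 else 0) (\<lambda>_. 0) h"
  using assms by (intro nth_equalityI) (auto simp: sum_delta_nth)

lemma aff_drop:
  assumes "length h = w1 + w2"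
  shows "drop w1 h = aff (w1 + w2) w2 (\<lambda>i j. if i + w1 = j then 1 else 0) (\<lambda>_. 0) h"
  using assms by (intro nth_equalityI) (auto simp: sum_delta_nth add.commute)

lemma eval_net_Cons2: "Ts \<noteq> [] \<Longrightarrow> eval_net (T # Ts) x = eval_net Ts (map relu (affine T x))"
  by (cases Ts) auto

lemma length_affine: "layer_dims T n m \<Longrightarrow> length (affine T x) = m"
  by (auto simp: affine_def layer_dims_def)

lemma eval_net_length:
  "net \<noteq> [] \<Longrightarrow> length ds = Suc (length net) \<Longrightarrow> (\<forall>i<length net. layer_dims (net!i) (ds!i) (ds!Suc i)) \<Longrightarrow> length x = ds!0 \<Longrightarrow>
   length (eval_net net x) = ds ! length net"
proof (induction net arbitrary: x ds)
  case Nil then show ?case by simp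
next
  case (Cons T Ts)
  have d0: "layer_dims T (ds!0) (ds!1)" using Cons.prems(3) by force
  show ?case
  proof (cases Ts)
    case Nil
    then show ?thesis using d0 by (simp add: length_affine)
  next
    case (Cons U Us)
    have "length (eval_net Ts (map relu (affine T x))) = (tl ds) ! length Ts"
    proof (rule Cons.IH)
      show "Ts \<noteq> []" using Cons by simp
      show "length (tl ds) = Suc (length Ts)" using Cons.prems(2) by simp
      show "\<forall>i<length Ts. layer_dims (Ts ! i) (tl ds ! i) (tl ds ! Suc i)"
      proof (intro allI impI)
        fix i assume "i < length Ts"
        then have "layer_dims ((T#Ts) ! Suc i) (ds ! Suc i) (ds ! Suc (Suc i))" using Cons.prems(3) by auto
        then show "layer_dims (Ts ! i) (tl ds ! i) (tl ds ! Suc i)"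
            using Cons.prems(2) by (cases ds) auto
      qed
      show "length (map relu (affine T x)) = tl ds ! 0" using d0 Cons.prems(2) by (cases ds) (auto simp: length_affine)
    qed
    then show ?thesis using Cons Cons.prems(2) by (cases ds) (auto simp: eval_net_Cons2)
  qed
qed

definition realizes :: "nat \<Rightarrow> nat list \<Rightarrow> nat \<Rightarrow> (real list \<Rightarrow> real list) \<Rightarrow> bool" where
  "realizes n ws m F \<longleftrightarrow> (\<exists>net. length net = Suc (length ws) \<and>
     (\<forall>i < length net. layer_dims (net ! i) ((n # ws @ [m]) ! i) ((n # ws @ [m]) ! Suc i)) \<and>
     (\<forall>x. length x = n \<longrightarrow> eval_net net x = F x))"

lemma realizes_length:
  assumes "realizes n ws m F" "length x = n"
  shows "length (F x) = m"
proof -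
  from assms(1) obtain net where net: "length net = Suc (length ws)"
     "\<forall>i < length net. layer_dims (net ! i) ((n # ws @ [m]) ! i) ((n # ws @ [m]) ! Suc i)"
     "\<forall>x. length x = n \<longrightarrow> eval_net net x = F x"
    unfolding realizes_def by blast
  have "length (eval_net net x) = (n # ws @ [m]) ! length net"
    by (rule eval_net_length) (use net assms(2) in auto)
  then show ?thesis using net(1,3) assms(2) by (simp add: nth_append)
qed

lemma realizes_cong:
  "realizes n ws m F \<Longrightarrow> (\<And>x. length x = n \<Longrightarrow> F x = G x) \<Longrightarrow> realizes n ws m G"
  unfolding realizes_def by metis

lemma realizes_single: "layer_dims T n m \<Longrightarrow> realizes n [] m (affine T)"
  unfolding realizes_def
  by (rule exI[of _ "[T]"]) auto

lemma realizes_aff: "realizes n [] m (aff n m A b)"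
  using realizes_single[OF layer_dims_mkL[of n m A b]]
  by (rule realizes_cong) (simp add: affine_mkL)

lemma realizes_cons:
  assumes T: "layer_dims T n w" and G: "realizes w ws m G"
  shows "realizes n (w # ws) m (\<lambda>x. G (map relu (affine T x)))"
proof -
  from G obtain net where net: "length net = Suc (length ws)"
    "\<forall>i < length net. layer_dims (net ! i) ((w # ws @ [m]) ! i) ((w # ws @ [m]) ! Suc i)"
    "\<forall>x. length x = w \<longrightarrow> eval_net net x = G x"
    unfolding realizes_def by blast
  have ne: "net \<noteq> []" using net(1) by auto
  show ?thesis unfolding realizes_def
  proof (intro exI[of _ "T # net"] conjI allI impI)
    show "length (T # net) = Suc (length (w # ws))" using net(1) by simp
  next
    fix i assume i: "i < length (T # net)"
    show "layer_dims ((T # net) ! i) ((n # (w # ws) @ [m]) ! i) ((n # (w # ws) @ [m]) ! Suc i)"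
    proof (cases i)
      case 0 then show ?thesis using T by simp
    next
      case (Suc k)
      then have "k < length net" using i by simp
      then show ?thesis using net(2) Suc by simp
    qed
  next
    fix x :: "real list" assume x: "length x = n"
    have l: "length (map relu (affine T x)) = w" using T by (simp add: length_affine)
    show "eval_net (T # net) x = G (map relu (affine T x))"
      using net(3) l ne by (simp add: eval_net_Cons2)
  qed
qed

lemma realizes_cons_aff:
  assumes G: "realizes w ws m G"
  shows "realizes n (w # ws) m (\<lambda>x. G (map relu (aff n w A b x)))"
  using realizes_cons[OF layer_dims_mkL G, of n A b]
  by (rule realizes_cong) (simp add: affine_mkL)

lemma realizes_NilD:
  assumes "realizes n [] m F"
  obtains A b where "\<And>x. length x = n \<Longrightarrow> F x = aff n m A b x"
proof -
  from assms obtain net where net: "length net = 1"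
    "\<forall>i < length net. layer_dims (net ! i) ([n, m] ! i) ([n, m] ! Suc i)"
    "\<forall>x. length x = n \<longrightarrow> eval_net net x = F x"
    unfolding realizes_def by auto
  then obtain T where T: "net = [T]" by (cases net) auto
  have d: "layer_dims T n m" using net(2) T by auto
  show ?thesis
  proof (rule that[of "\<lambda>i j. fst T ! i ! j" "\<lambda>i. snd T ! i"])
    fix x :: "real list" assume "length x = n"
    then show "F x = aff n m (\<lambda>i j. fst T ! i ! j) (\<lambda>i. snd T ! i) x"
      using net(3) T affine_as_aff[OF d] by simp
  qed
qed

lemma realizes_ConsD:
  assumes "realizes n (w # ws) m F"
  obtains A b G where "realizes w ws m G" "\<And>x. length x = n \<Longrightarrow> F x = G (map relu (aff n w A b x))"
proof -
  from assms obtain net where net: "length net = Suc (Suc (length ws))"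
    "\<forall>i < length net. layer_dims (net ! i) ((n # w # ws @ [m]) ! i) ((n # w # ws @ [m]) ! Suc i)"
    "\<forall>x. length x = n \<longrightarrow> eval_net net x = F x"
    unfolding realizes_def by auto
  then obtain T net' where T: "net = T # net'" by (cases net) auto
  have d: "layer_dims T n w" using net(2) T by force
  have ne: "net' \<noteq> []" using net(1) T by auto
  have G: "realizes w ws m (eval_net net')"
    unfolding realizes_def
  proof (intro exI[of _ net'] conjI allI impI)
    show "length net' = Suc (length ws)" using net(1) T by simp
    fix i assume "i < length net'"
    then have "Suc i < length net" using T by simp
    then show "layer_dims (net' ! i) ((w # ws @ [m]) ! i) ((w # ws @ [m]) ! Suc i)"
      using net(2) T by fastforce
  qed simp
  have "\<And>x. length x = n \<Longrightarrow> F x = eval_net net' (map relu (aff n w (\<lambda>i j. fst T ! i ! j) (\<lambda>i. snd T ! i) x))"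
    using net(3) T ne d by (simp add: eval_net_Cons2 affine_as_aff)
  with G show ?thesis using that by blast
qed



lemma realizes_post_aff:
  "realizes n ws m F \<Longrightarrow> realizes n ws p (\<lambda>x. aff m p C d (F x))"
proof (induction ws arbitrary: n F)
  case Nil
  then obtain A b where F: "\<And>x. length x = n \<Longrightarrow> F x = aff n m A b x" by (metis realizes_NilD)
  show ?case
    by (rule realizes_cong[OF realizes_aff]) (simp add: F aff_comp)
next
  case (Cons w ws)
  from Cons.prems obtain A b G where G: "realizes w ws m G"
    and F: "\<And>x. length x = n \<Longrightarrow> F x = G (map relu (aff n w A b x))" by (metis realizes_ConsD)
  show ?case
    by (rule realizes_cong[OF realizes_cons_aff[OF Cons.IH[OF G]]]) (simp add: F)
qed

lemma realizes_pre_aff: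
  assumes "realizes m ws p G"
  shows "realizes n ws p (\<lambda>x. G (aff n m A b x))"
proof (cases ws)
  case Nil
  with assms obtain C d where G: "\<And>y. length y = m \<Longrightarrow> G y = aff m p C d y" by (metis realizes_NilD)
  show ?thesis unfolding Nil
    by (rule realizes_cong[OF realizes_aff]) (simp add: G aff_comp)
next
  case (Cons w ws')
  with assms obtain C d H where H: "realizes w ws' p H"
    and G: "\<And>y. length y = m \<Longrightarrow> G y = H (map relu (aff m w C d y))" by (metis realizes_ConsD)
  show ?thesis unfolding Cons
    by (rule realizes_cong[OF realizes_cons_aff[OF H]]) (simp add: G aff_comp)
qed

lemma realizes_comp:
  "realizes n ws m F \<Longrightarrow> realizes m vs p G \<Longrightarrow> realizes n (ws @ vs) p (\<lambda>x. G (F x))"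
proof (induction ws arbitrary: n F)
  case Nil
  then obtain A b where F: "\<And>x. length x = n \<Longrightarrow> F x = aff n m A b x" by (metis realizes_NilD)
  have "realizes n vs p (\<lambda>x. G (F x))"
    by (rule realizes_cong[OF realizes_pre_aff[OF Nil.prems(2)]]) (simp add: F)
  then show ?case by simp
next
  case (Cons w ws)
  from Cons.prems(1) obtain A b F' where F': "realizes w ws m F'"
    and F: "\<And>x. length x = n \<Longrightarrow> F x = F' (map relu (aff n w A b x))" by (metis realizes_ConsD)
  have "realizes n (w # ws @ vs) p (\<lambda>x. G (F x))"
    by (rule realizes_cong[OF realizes_cons_aff[OF Cons.IH[OF F' Cons.prems(2)]]]) (simp add: F)
  then show ?case by simp
qed

lemma realizes_par:
  "realizes n ws m1 F1 \<Longrightarrow> realizes n vs m2 F2 \<Longrightarrow> length ws = length vs \<Longrightarrow>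
   realizes n (map2 (+) ws vs) (m1 + m2) (\<lambda>x. F1 x @ F2 x)"
proof (induction ws arbitrary: vs n F1 F2)
  case Nil
  then have vs: "vs = []" by simp
  obtain A1 b1 where F1: "\<And>x. length x = n \<Longrightarrow> F1 x = aff n m1 A1 b1 x" using Nil.prems(1) by (metis realizes_NilD)
  obtain A2 b2 where F2: "\<And>x. length x = n \<Longrightarrow> F2 x = aff n m2 A2 b2 x" using Nil.prems(2) vs by (metis realizes_NilD)
  have "realizes n [] (m1 + m2) (\<lambda>x. F1 x @ F2 x)"
    by (rule realizes_cong[OF realizes_aff]) (simp add: F1 F2 aff_append)
  then show ?case unfolding vs by simp
next
  case (Cons w1 ws)
  obtain w2 vs' where vs: "vs = w2 # vs'" using Cons.prems(3) by (cases vs) auto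
  from Cons.prems(1) obtain A1 b1 G1 where G1: "realizes w1 ws m1 G1"
    and F1: "\<And>x. length x = n \<Longrightarrow> F1 x = G1 (map relu (aff n w1 A1 b1 x))" by (metis realizes_ConsD)
  from Cons.prems(2) vs obtain A2 b2 G2 where G2: "realizes w2 vs' m2 G2"
    and F2: "\<And>x. length x = n \<Longrightarrow> F2 x = G2 (map relu (aff n w2 A2 b2 x))" by (metis realizes_ConsD)
  have G1': "realizes (w1 + w2) ws m1 (\<lambda>h. G1 (take w1 h))"
    by (rule realizes_cong[OF realizes_pre_aff[OF G1, of "w1 + w2" "\<lambda>i j. if i = j then 1 else 0" "\<lambda>_. 0"]])
       (simp add: aff_take)
  have G2': "realizes (w1 + w2) vs' m2 (\<lambda>h. G2 (drop w1 h))"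
    by (rule realizes_cong[OF realizes_pre_aff[OF G2, of "w1 + w2" "\<lambda>i j. if i + w1 = j then 1 else 0" "\<lambda>_. 0"]])
       (simp add: aff_drop)
  have IH: "realizes (w1 + w2) (map2 (+) ws vs') (m1 + m2) (\<lambda>h. G1 (take w1 h) @ G2 (drop w1 h))"
    using Cons.IH[OF G1' G2'] Cons.prems(3) vs by simp
  have "realizes n ((w1 + w2) # map2 (+) ws vs') (m1 + m2) (\<lambda>x. F1 x @ F2 x)"
    by (rule realizes_cong[OF realizes_cons_aff[OF IH, where A="\<lambda>i j. if i < w1 then A1 i j else A2 (i - w1) j"
          and b = "\<lambda>i. if i < w1 then b1 i else b2 (i - w1)"]])
       (simp add: F1 F2 aff_append[symmetric])
  then show ?case unfolding vs by simp
qed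

definition rz :: "nat \<Rightarrow> nat \<Rightarrow> nat \<Rightarrow> nat \<Rightarrow> (real list \<Rightarrow> real list) \<Rightarrow> bool" where
  "rz n d wm m F \<longleftrightarrow> (\<exists>ws. realizes n ws m F \<and> length ws = d \<and> (\<forall>w\<in>set ws. w \<le> wm))"

lemma rz_cong: "rz n d wm m F \<Longrightarrow> (\<And>x. length x = n \<Longrightarrow> F x = G x) \<Longrightarrow> rz n d wm m G"
  unfolding rz_def using realizes_cong by blast

lemma rz_mono: "rz n d wm m F \<Longrightarrow> wm \<le> wm' \<Longrightarrow> rz n d wm' m F"
  unfolding rz_def by force

lemma rz_length: "rz n d wm m F \<Longrightarrow> length x = n \<Longrightarrow> length (F x) = m"
  unfolding rz_def using realizes_length by blast

lemma rz_aff: "rz n 0 wm m (aff n m A b)"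
  unfolding rz_def using realizes_aff by force

lemma rz_post_aff: "rz n d wm m F \<Longrightarrow> rz n d wm p (\<lambda>x. aff m p C d' (F x))"
  unfolding rz_def using realizes_post_aff by blast

lemma rz_pre_aff: "rz m d wm p G \<Longrightarrow> rz n d wm p (\<lambda>x. G (aff n m A b x))"
  unfolding rz_def using realizes_pre_aff by blast

lemma rz_comp: "rz n d1 wm m F \<Longrightarrow> rz m d2 wm p G \<Longrightarrow> rz n (d1 + d2) wm p (\<lambda>x. G (F x))"
  unfolding rz_def using realizes_comp by fastforce

lemma rz_par:
  assumes "rz n d w1 m1 F1" "rz n d w2 m2 F2"
  shows "rz n d (w1 + w2) (m1 + m2) (\<lambda>x. F1 x @ F2 x)"
proof -
  from assms obtain ws vs where ws: "realizes n ws m1 F1" "length ws = d" "\<forall>w\<in>set ws. w \<le> w1"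
    and vs: "realizes n vs m2 F2" "length vs = d" "\<forall>w\<in>set vs. w \<le> w2"
    unfolding rz_def by blast
  have "\<forall>w\<in>set (map2 (+) ws vs). w \<le> w1 + w2"
  proof
    fix w assume "w \<in> set (map2 (+) ws vs)"
    then obtain i where i: "i < length (map2 (+) ws vs)" "w = map2 (+) ws vs ! i" by (metis in_set_conv_nth)
    then have "w = ws ! i + vs ! i" "i < length ws" "i < length vs" by auto
    then show "w \<le> w1 + w2" using ws(3) vs(3) by (metis add_mono nth_mem)
  qed
  then show ?thesis unfolding rz_def
    using realizes_par[OF ws(1) vs(1)] ws(2) vs(2) by force
qed

lemma rz_layer:
  "w \<le> wm \<Longrightarrow> rz n 1 wm m (\<lambda>x. aff w m A2 b2 (map relu (aff n w A1 b1 x)))"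
  unfolding rz_def using realizes_cons_aff[OF realizes_aff, where w=w and m=m and A=A1 and b=b1 and n=n] by force

lemma rz_NN:
  assumes "rz 1 d wm 1 F" "d \<le> Lb"
  shows "(\<lambda>t. hd (F [t])) \<in> NN wm Lb"
proof -
  from assms obtain ws where ws: "realizes 1 ws 1 F" "length ws = d" "\<forall>w\<in>set ws. w \<le> wm"
    unfolding rz_def by blast
  from ws(1) obtain net where net: "length net = Suc (length ws)"
    "\<forall>i < length net. layer_dims (net ! i) ((1 # ws @ [1]) ! i) ((1 # ws @ [1]) ! Suc i)"
    "\<forall>x. length x = 1 \<longrightarrow> eval_net net x = F x"
    unfolding realizes_def by blast
  show ?thesis unfolding NN_def
  proof (intro CollectI exI[of _ net] exI[of _ "1 # ws @ [1]"] conjI allI impI)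
    show "net \<noteq> []" using net(1) by auto
    show "length (1 # ws @ [1]) = length net + 1" using net(1) by simp
    show "(1 # ws @ [1]) ! 0 = 1" by simp
    show "(1 # ws @ [1]) ! length net = 1" using net(1) by (simp add: nth_append)
    show "\<And>i. i < length net \<Longrightarrow> layer_dims (net ! i) ((1 # ws @ [1]) ! i) ((1 # ws @ [1]) ! Suc i)"
      using net(2) by blast
    show "length net - 1 \<le> Lb" using net(1) ws(2) assms(2) by simp
  next
    fix i assume i: "1 \<le> i \<and> i < length net"
    then obtain k where k: "i = Suc k" "k < length ws" using net(1) by (cases i) auto
    then show "(1 # ws @ [1]) ! i \<le> wm" using ws(3) by (simp add: nth_append)
  next
    fix t show "hd (F [t]) = hd (eval_net net [t])" using net(3) by simp
  qed
qed



lemma sum_split_add: fixes a b :: nat shows "(\<Sum>i<a + b. f i) = (\<Sum>i<a. f i) + (\<Sum>i<b. f (a + i))"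
  by (induction b) (simp_all add: add.assoc)

lemma sum_group: fixes J a :: nat shows "(\<Sum>j<a * J. f j) = (\<Sum>g<J. \<Sum>e<a. f (a * g + e))"
proof (induction J)
  case 0 then show ?case by simp
next
  case (Suc J)
  have "(\<Sum>j<a * Suc J. f j) = (\<Sum>j<a * J + a. f j)" by (simp add: add.commute)
  also have "\<dots> = (\<Sum>j<a * J. f j) + (\<Sum>e<a. f (a * J + e))" by (rule sum_split_add)
  finally show ?case using Suc by simp
qed

lemma sum4: "(\<Sum>e<4::nat. f e) = f 0 + f 1 + f 2 + (f 3 :: real)"
  by (simp add: eval_nat_numeral)

lemma relu_nonneg: "relu x \<ge> 0" by (simp add: relu_def)
lemma relu_pos: "x \<ge> 0 \<Longrightarrow> relu x = x" by (simp add: relu_def)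
lemma relu_neg: "x \<le> 0 \<Longrightarrow> relu x = 0" by (simp add: relu_def)
lemma relu_diff: "relu x - relu (- x) = x" by (simp add: relu_def)
lemma relu_scale: "c \<ge> 0 \<Longrightarrow> relu (c * x) = c * relu x"
  by (simp add: relu_def max_mult_distrib_left)
lemma relu_relu: "relu (relu x) = relu x" by (simp add: relu_def)

lemma psi_shape:
  fixes lo g c e h \<sigma> lm t :: real
  assumes "lo < g" "g \<le> c" "c \<le> e" "e < h"
    and sig: "\<sigma> * (g - lo) = g - c" and lam: "lm * (h - e) = e - c"
  defines "\<Psi> \<equiv> \<sigma> * relu (t - lo) + (1 - \<sigma>) * relu (t - g) - (1 + lm) * relu (t - e) + lm * relu (t - h)"
  shows "relu \<Psi> = relu (t - c) - (1 + lm) * relu (t - e) + lm * relu (t - h)"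
    and "t \<le> lo \<or> h \<le> t \<Longrightarrow> \<Psi> = 0"
proof -
  have s0: "\<sigma> \<le> 0"
  proof (rule ccontr)
    assume "\<not> \<sigma> \<le> 0"
    then have "\<sigma> * (g - lo) > 0" using assms(1) by simp
    then show False using sig assms(2) by simp
  qed
  have l0: "lm \<ge> 0"
  proof (rule ccontr)
    assume "\<not> lm \<ge> 0"
    then have "lm * (h - e) < 0" using assms(4) by (simp add: mult_neg_pos)
    then show False using lam assms(3) by simp
  qed
  have A: "relu \<Psi> = relu (t - c) - (1 + lm) * relu (t - e) + lm * relu (t - h) \<and> (t \<le> lo \<or> h \<le> t \<longrightarrow> \<Psi> = 0)"
  proof (cases "t \<le> lo")
    case True
    then have "\<Psi> = 0" unfolding \<Psi>_def using assms(1-4) by (simp add: relu_neg)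
    then show ?thesis using True assms(1-4) by (simp add: relu_neg)
  next
    case t1: False
    show ?thesis
    proof (cases "t \<le> g")
      case True
      have "\<Psi> = \<sigma> * (t - lo)" unfolding \<Psi>_def using True t1 assms(1-4) by (simp add: relu_neg relu_pos)
      moreover have "\<sigma> * (t - lo) \<le> 0" using s0 t1 by (simp add: mult_nonpos_nonneg)
      ultimately show ?thesis using True t1 assms(1-4) by (simp add: relu_neg)
    next
      case t2: False
      show ?thesis
      proof (cases "t \<le> e")
        case True
        have "\<Psi> = \<sigma> * (t - lo) + (1 - \<sigma>) * (t - g)" unfolding \<Psi>_def using True t1 t2 assms(1-4) by (simp add: relu_neg relu_pos)
        also have "\<dots> = t - g + \<sigma> * (g - lo)" by (simp add: algebra_simps)
        also have "\<dots> = t - c" using sig by simp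
        finally show ?thesis using True t1 t2 assms(1-4) by (auto simp: relu_neg relu_pos relu_def)
      next
        case t3: False
        have "\<Psi> = \<sigma> * (t - lo) + (1 - \<sigma>) * (t - g) - (1 + lm) * (t - e) + lm * relu (t - h)"
          unfolding \<Psi>_def using t1 t2 t3 assms(1-4) by (simp add: relu_pos)
        also have "\<sigma> * (t - lo) + (1 - \<sigma>) * (t - g) = t - g + \<sigma> * (g - lo)" by (simp add: algebra_simps)
        also have "\<dots> = t - c" using sig by simp
        finally have P: "\<Psi> = t - c - (1 + lm) * (t - e) + lm * relu (t - h)" .
        show ?thesis
        proof (cases "t \<le> h")
          case True
          have "\<Psi> = (e - c) - lm * (t - e)" using P True by (simp add: relu_neg algebra_simps)
          also have "\<dots> = lm * (h - t)" using lam by (simp add: algebra_simps)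
          finally have Q: "\<Psi> = lm * (h - t)" .
          have "lm * (h - t) \<ge> 0" using l0 True by simp
          then show ?thesis using Q P True t1 t2 t3 assms(1-4) by (auto simp: relu_neg relu_pos)
        next
          case False
          have "\<Psi> = (e - c) - lm * (h - e)" using P False by (simp add: relu_pos algebra_simps)
          also have "\<dots> = 0" using lam by simp
          finally have Q: "\<Psi> = 0" .
          show ?thesis using Q P False t1 t2 t3 assms(1-4) by (simp add: relu_pos relu_neg)
        qed
      qed
    qed
  qed
  then show "relu \<Psi> = relu (t - c) - (1 + lm) * relu (t - e) + lm * relu (t - h)"
    and "t \<le> lo \<or> h \<le> t \<Longrightarrow> \<Psi> = 0" by auto
qed

lemma sum_single:
  assumes "finite A" "x \<in> A" "\<And>y. y \<in> A \<Longrightarrow> y \<noteq> x \<Longrightarrow> f y = (0::real)"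
  shows "sum f A = f x"
  using sum.remove[OF assms(1,2), of f] assms(3) by (simp add: sum.neutral)

lemma relu_sum_disjoint:
  fixes c :: "nat \<Rightarrow> real" and f :: "nat \<Rightarrow> real"
  assumes c: "\<And>g. g < J \<Longrightarrow> c g \<ge> 0"
    and dis: "\<And>g1 g2. g1 < J \<Longrightarrow> g2 < J \<Longrightarrow> f g1 \<noteq> 0 \<Longrightarrow> f g2 \<noteq> 0 \<Longrightarrow> g1 = g2"
  shows "relu (\<Sum>g<J. c g * f g) = (\<Sum>g<J. c g * relu (f g))"
proof (cases "\<exists>g0<J. f g0 \<noteq> 0")
  case True
  then obtain g0 where g0: "g0 < J" "f g0 \<noteq> 0" by blast
  have z: "\<And>g. g < J \<Longrightarrow> g \<noteq> g0 \<Longrightarrow> f g = 0" using dis g0 by blast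
  have "(\<Sum>g<J. c g * f g) = c g0 * f g0"
    by (rule sum_single) (use z g0 in auto)
  moreover have "(\<Sum>g<J. c g * relu (f g)) = c g0 * relu (f g0)"
    by (rule sum_single) (use z g0 in \<open>auto simp: relu_def\<close>)
  ultimately show ?thesis using c g0 by (simp add: relu_scale)
next
  case False
  then show ?thesis by (simp add: relu_def)
qed


locale hinge =
  fixes \<tau> :: "nat \<Rightarrow> real" and K :: nat
  assumes gap: "\<And>q. \<tau> q + 1/2 \<le> \<tau> (Suc q)" and Kpos: "1 \<le> K"
begin

lemma tau_mono: "i \<le> j \<Longrightarrow> \<tau> i \<le> \<tau> j"
proof (induction j)
  case 0 then show ?case by simp
next
  case (Suc j)
  show ?case
  proof (cases "i = Suc j")
    case False
    then have "\<tau> i \<le> \<tau> j" using Suc by simp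
    then show ?thesis using gap[of j] by simp
  qed simp
qed

lemma tau_less: "i < j \<Longrightarrow> \<tau> i + 1/2 \<le> \<tau> j"
  using gap[of i] tau_mono[of "Suc i" j] by simp

definition "lo G = \<tau> (G*K) - 1/4"
definition "ee G = \<tau> (G*K + (K - 1))"
definition "tk G k = \<tau> (G*K + k)"
definition "ptv G e = (if e = 0 then lo G else if e = (1::nat) then tk G 0 else if e = 2 then ee G else lo (Suc G))"
definition "sg G k = 4 * (tk G 0 - tk G k)"
definition "lm G k = (ee G - tk G k) / (lo (Suc G) - ee G)"
definition "psc G k e = (if e = 0 then sg G k else if e = (1::nat) then 1 - sg G k else if e = 2 then - (1 + lm G k) else lm G k)"
definition "Psi G k t = (\<Sum>e<4. psc G k e * relu (t - ptv G e))"

lemma ee_hi: "ee G + 1/4 \<le> lo (Suc G)"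
proof -
  have "G*K + (K - 1) < Suc G * K" using Kpos by simp
  then have "\<tau> (G*K + (K - 1)) + 1/2 \<le> \<tau> (Suc G * K)" by (rule tau_less)
  then show ?thesis unfolding ee_def lo_def by simp
qed

lemma lo_mono: "G \<le> G' \<Longrightarrow> lo G \<le> lo G'"
  unfolding lo_def by (simp add: tau_mono)

lemma psi_facts:
  assumes k: "k < K"
  shows "relu (Psi G k t) = relu (t - tk G k) - (1 + lm G k) * relu (t - ee G) + lm G k * relu (t - lo (Suc G))"
    and "t \<le> lo G \<or> lo (Suc G) \<le> t \<Longrightarrow> Psi G k t = 0"
proof -
  have a1: "lo G < tk G 0" by (simp add: lo_def tk_def)
  have a2: "tk G 0 \<le> tk G k" by (simp add: tk_def tau_mono)
  have a3: "tk G k \<le> ee G" using k by (simp add: tk_def ee_def tau_mono)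
  have a4: "ee G < lo (Suc G)" using ee_hi[of G] by simp
  have sig: "sg G k * (tk G 0 - lo G) = tk G 0 - tk G k" by (simp add: sg_def lo_def tk_def)
  have lam: "lm G k * (lo (Suc G) - ee G) = ee G - tk G k" using a4 by (simp add: lm_def)
  have P: "Psi G k t = sg G k * relu (t - lo G) + (1 - sg G k) * relu (t - tk G 0) - (1 + lm G k) * relu (t - ee G) + lm G k * relu (t - lo (Suc G))"
    unfolding Psi_def sum4 by (simp add: psc_def ptv_def algebra_simps)
  show "relu (Psi G k t) = relu (t - tk G k) - (1 + lm G k) * relu (t - ee G) + lm G k * relu (t - lo (Suc G))"
    unfolding P by (rule psi_shape(1)[OF a1 a2 a3 a4 sig lam])
  show "t \<le> lo G \<or> lo (Suc G) \<le> t \<Longrightarrow> Psi G k t = 0"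
    unfolding P by (rule psi_shape(2)[OF a1 a2 a3 a4 sig lam])
qed

lemma psi_disjoint:
  assumes k: "k < K" and "Psi G1 k t \<noteq> 0" "Psi G2 k t \<noteq> 0"
  shows "G1 = G2"
proof (rule ccontr)
  have s1: "lo G1 < t" "t < lo (Suc G1)" using psi_facts(2)[OF k, of t G1] assms(2) by force+
  have s2: "lo G2 < t" "t < lo (Suc G2)" using psi_facts(2)[OF k, of t G2] assms(3) by force+
  assume "G1 \<noteq> G2"
  then consider "Suc G1 \<le> G2" | "Suc G2 \<le> G1" by linarith
  then show False
  proof cases
    case 1 then show False using lo_mono[OF 1] s1 s2 by simp
  next
    case 2 then show False using lo_mono[OF 2] s1 s2 by simp
  qed
qed

definition "bc \<alpha> G e = (\<Sum>k<K. \<alpha> (G*K+k) * (if e = (2::nat) then 1 + lm G k else if e = 3 then - lm G k else 0))"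

definition "L1b G0 = (\<lambda>j. - ptv (G0 + j div 4) (j mod 4))"

definition "L2A G0 \<alpha> = (\<lambda>i j. let G = G0 + j div 4; e = j mod 4 in
   if i < K then max (\<alpha> (G*K+i)) 0 * psc G i e
   else if i < 2*K then max (- \<alpha> (G*K + (i-K))) 0 * psc G (i-K) e
   else if i = 2*K then bc \<alpha> G e else - bc \<alpha> G e)"

definition "L3A = (\<lambda>(_::nat) i. if i < K then 1 else if i < 2*K then -1 else if i = 2*K then 1 else (-1::real))"

definition "Hnet G0 J \<alpha> x = aff (2*K+2) 1 L3A (\<lambda>_. 0)
   (map relu (aff (4*J) (2*K+2) (L2A G0 \<alpha>) (\<lambda>_. 0) (map relu (aff 1 (4*J) (\<lambda>_ _. 1) (L1b G0) x))))"

lemma Hnet_realizes: "realizes 1 [4*J, 2*K+2] 1 (Hnet G0 J \<alpha>)"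
  unfolding Hnet_def[abs_def] by (intro realizes_cons_aff realizes_aff)

definition "Sv G0 J \<alpha> i t = (\<Sum>g<J. \<Sum>e<4. L2A G0 \<alpha> i (4*g+e) * relu (t - ptv (G0+g) e))"

lemma Hnet_Sv: "Hnet G0 J \<alpha> [t] = [\<Sum>i<2*K+2. L3A 0 i * relu (Sv G0 J \<alpha> i t)]"
proof -
  define h1 where "h1 = map relu (aff 1 (4*J) (\<lambda>_ _. 1) (L1b G0) [t])"
  have lh1: "length h1 = 4*J" by (simp add: h1_def)
  have h1: "j < 4*J \<Longrightarrow> h1 ! j = relu (t - ptv (G0 + j div 4) (j mod 4))" for j
    by (simp add: h1_def L1b_def)
  have S: "(\<Sum>j<4*J. L2A G0 \<alpha> i j * h1 ! j) = Sv G0 J \<alpha> i t" for i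
  proof -
    have "(\<Sum>j<4*J. L2A G0 \<alpha> i j * h1 ! j) = (\<Sum>g<J. \<Sum>e<4. L2A G0 \<alpha> i (4*g+e) * h1 ! (4*g+e))"
      by (rule sum_group)
    also have "\<dots> = Sv G0 J \<alpha> i t" unfolding Sv_def
    proof (intro sum.cong refl)
      fix g e assume "g \<in> {..<J}" "e \<in> {..<4::nat}"
      then have "4*g+e < 4*J" "(4*g+e) div 4 = g" "(4*g+e) mod 4 = e" by auto
      then show "L2A G0 \<alpha> i (4*g+e) * h1 ! (4*g+e) = L2A G0 \<alpha> i (4*g+e) * relu (t - ptv (G0+g) e)"
        using h1 by simp
    qed
    finally show ?thesis .
  qed
  show ?thesis unfolding Hnet_def h1_def[symmetric]
    by (rule nth_equalityI) (simp_all add: S)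
qed


lemma L2A_eval:
  assumes "e < 4"
  shows "L2A G0 \<alpha> i (4*g+e) = (if i < K then max (\<alpha> ((G0+g)*K+i)) 0 * psc (G0+g) i e
   else if i < 2*K then max (- \<alpha> ((G0+g)*K + (i-K))) 0 * psc (G0+g) (i-K) e
   else if i = 2*K then bc \<alpha> (G0+g) e else - bc \<alpha> (G0+g) e)"
proof -
  have "(4*g+e) div 4 = g" "(4*g+e) mod 4 = e" using assms by auto
  then show ?thesis unfolding L2A_def Let_def by simp
qed

lemma Sv_low:
  assumes "k < K"
  shows "Sv G0 J \<alpha> k t = (\<Sum>g<J. max (\<alpha> ((G0+g)*K+k)) 0 * Psi (G0+g) k t)"
  unfolding Sv_def Psi_def
proof (intro sum.cong refl)
  fix g assume "g \<in> {..<J}"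
  have "(\<Sum>e<4. L2A G0 \<alpha> k (4*g+e) * relu (t - ptv (G0+g) e)) = (\<Sum>e<4. max (\<alpha> ((G0+g)*K+k)) 0 * (psc (G0+g) k e * relu (t - ptv (G0+g) e)))"
    by (intro sum.cong refl) (simp add: L2A_eval assms)
  also have "\<dots> = max (\<alpha> ((G0+g)*K+k)) 0 * (\<Sum>e<4. psc (G0+g) k e * relu (t - ptv (G0+g) e))"
    by (simp add: sum_distrib_left)
  finally show "(\<Sum>e<4. L2A G0 \<alpha> k (4*g+e) * relu (t - ptv (G0+g) e)) = max (\<alpha> ((G0+g)*K+k)) 0 * (\<Sum>e<4. psc (G0+g) k e * relu (t - ptv (G0+g) e))" .
qed

lemma Sv_high:
  assumes "k < K"
  shows "Sv G0 J \<alpha> (K+k) t = (\<Sum>g<J. max (- \<alpha> ((G0+g)*K+k)) 0 * Psi (G0+g) k t)"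
  unfolding Sv_def Psi_def
proof (intro sum.cong refl)
  fix g assume "g \<in> {..<J}"
  have "(\<Sum>e<4. L2A G0 \<alpha> (K+k) (4*g+e) * relu (t - ptv (G0+g) e)) = (\<Sum>e<4. max (- \<alpha> ((G0+g)*K+k)) 0 * (psc (G0+g) k e * relu (t - ptv (G0+g) e)))"
    by (intro sum.cong refl) (simp add: L2A_eval assms)
  also have "\<dots> = max (- \<alpha> ((G0+g)*K+k)) 0 * (\<Sum>e<4. psc (G0+g) k e * relu (t - ptv (G0+g) e))"
    by (simp add: sum_distrib_left)
  finally show "(\<Sum>e<4. L2A G0 \<alpha> (K+k) (4*g+e) * relu (t - ptv (G0+g) e)) = max (- \<alpha> ((G0+g)*K+k)) 0 * (\<Sum>e<4. psc (G0+g) k e * relu (t - ptv (G0+g) e))" .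
qed

definition "Bs G0 J \<alpha> t = (\<Sum>g<J. \<Sum>k<K. \<alpha> ((G0+g)*K+k) * ((1 + lm (G0+g) k) * relu (t - ee (G0+g)) - lm (G0+g) k * relu (t - lo (Suc (G0+g)))))"

lemma Sv_base: "Sv G0 J \<alpha> (2*K) t = Bs G0 J \<alpha> t" and Sv_base': "Sv G0 J \<alpha> (Suc (2*K)) t = - Bs G0 J \<alpha> t"
proof -
  have S2: "Sv G0 J \<alpha> (2*K) t = (\<Sum>g<J. \<Sum>e<4. bc \<alpha> (G0+g) e * relu (t - ptv (G0+g) e))"
    unfolding Sv_def using Kpos by (intro sum.cong refl) (simp add: L2A_eval)
  also have "\<dots> = Bs G0 J \<alpha> t" unfolding Bs_def
  proof (rule sum.cong[OF refl])
    fix g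
    let ?G = "G0 + g"
    have "(\<Sum>e<4. bc \<alpha> ?G e * relu (t - ptv ?G e)) = bc \<alpha> ?G 2 * relu (t - ee ?G) + bc \<alpha> ?G 3 * relu (t - lo (Suc ?G))"
      by (simp add: sum4 bc_def ptv_def)
    also have "\<dots> = (\<Sum>k<K. \<alpha> (?G*K+k) * ((1 + lm ?G k) * relu (t - ee ?G) - lm ?G k * relu (t - lo (Suc ?G))))"
    proof -
      have "(\<Sum>k<K. \<alpha> (?G*K+k) * ((1 + lm ?G k) * relu (t - ee ?G) - lm ?G k * relu (t - lo (Suc ?G)))) =
        (\<Sum>k<K. (\<alpha> (?G*K+k) * (1 + lm ?G k)) * relu (t - ee ?G) - (\<alpha> (?G*K+k) * lm ?G k) * relu (t - lo (Suc ?G)))"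
        by (intro sum.cong refl) (simp add: algebra_simps)
      also have "\<dots> = (\<Sum>k<K. \<alpha> (?G*K+k) * (1 + lm ?G k)) * relu (t - ee ?G) - (\<Sum>k<K. \<alpha> (?G*K+k) * lm ?G k) * relu (t - lo (Suc ?G))"
        by (simp add: sum_subtractf sum_distrib_right)
      finally have E: "(\<Sum>k<K. \<alpha> (?G*K+k) * ((1 + lm ?G k) * relu (t - ee ?G) - lm ?G k * relu (t - lo (Suc ?G)))) = (\<Sum>k<K. \<alpha> (?G*K+k) * (1 + lm ?G k)) * relu (t - ee ?G) - (\<Sum>k<K. \<alpha> (?G*K+k) * lm ?G k) * relu (t - lo (Suc ?G))" .
      moreover have "bc \<alpha> ?G 2 = (\<Sum>k<K. \<alpha> (?G*K+k) * (1 + lm ?G k))" by (simp add: bc_def)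
      moreover have "bc \<alpha> ?G 3 = - (\<Sum>k<K. \<alpha> (?G*K+k) * lm ?G k)" by (simp add: bc_def sum_negf)
      ultimately show ?thesis by simp
    qed
    finally show "(\<Sum>e<4. bc \<alpha> ?G e * relu (t - ptv ?G e)) = (\<Sum>k<K. \<alpha> (?G*K+k) * ((1 + lm ?G k) * relu (t - ee ?G) - lm ?G k * relu (t - lo (Suc ?G))))" .
  qed
  finally show B1: "Sv G0 J \<alpha> (2*K) t = Bs G0 J \<alpha> t" .
  have "Sv G0 J \<alpha> (2*K+1) t = (\<Sum>g<J. \<Sum>e<4. - (bc \<alpha> (G0+g) e * relu (t - ptv (G0+g) e)))"
    unfolding Sv_def using Kpos by (intro sum.cong refl) (simp add: L2A_eval)
  also have "\<dots> = - (\<Sum>g<J. \<Sum>e<4. bc \<alpha> (G0+g) e * relu (t - ptv (G0+g) e))"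
    by (simp add: sum_negf)
  finally show "Sv G0 J \<alpha> (Suc (2*K)) t = - Bs G0 J \<alpha> t" using B1 S2 by simp
qed

lemma relu_Sv_low:
  assumes "k < K"
  shows "relu (Sv G0 J \<alpha> k t) = (\<Sum>g<J. max (\<alpha> ((G0+g)*K+k)) 0 * relu (Psi (G0+g) k t))"
  unfolding Sv_low[OF assms]
  apply (rule relu_sum_disjoint)
   apply simp
  using psi_disjoint[OF assms] by (metis add_left_cancel)

lemma relu_Sv_high:
  assumes "k < K"
  shows "relu (Sv G0 J \<alpha> (K+k) t) = (\<Sum>g<J. max (- \<alpha> ((G0+g)*K+k)) 0 * relu (Psi (G0+g) k t))"
  unfolding Sv_high[OF assms]
  apply (rule relu_sum_disjoint)
   apply simp
  using psi_disjoint[OF assms] by (metis add_left_cancel)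

lemma out_sum: "(\<Sum>i<2*K+2. L3A 0 i * (f i :: real)) = (\<Sum>k<K. f k) - (\<Sum>k<K. f (K+k)) + f (2*K) - f (2*K+1)"
proof -
  have "(\<Sum>i<2*K+2. L3A 0 i * f i) = (\<Sum>i<K + (K + 2). L3A 0 i * f i)" by (simp add: mult_2 add.assoc)
  also have "\<dots> = (\<Sum>i<K. L3A 0 i * f i) + (\<Sum>i<K + 2. L3A 0 (K + i) * f (K + i))" by (rule sum_split_add)
  also have "(\<Sum>i<K + 2. L3A 0 (K + i) * f (K + i)) = (\<Sum>i<K. L3A 0 (K + i) * f (K + i)) + (\<Sum>i<2. L3A 0 (K + (K + i)) * f (K + (K + i)))"
    by (rule sum_split_add)
  also have "(\<Sum>i<K. L3A 0 i * f i) = (\<Sum>i<K. f i)" by (intro sum.cong) (auto simp: L3A_def)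
  also have "(\<Sum>i<K. L3A 0 (K + i) * f (K + i)) = (\<Sum>i<K. - f (K + i))" by (intro sum.cong) (auto simp: L3A_def)
  also have "(\<Sum>i<2. L3A 0 (K + (K + i)) * f (K + (K + i))) = f (2*K) - f (2*K+1)"
    by (simp add: L3A_def numeral_2_eq_2 mult_2)
  finally show ?thesis by (simp add: sum_negf)
qed

lemma Hnet_eval:
  "Hnet G0 J \<alpha> [t] = [\<Sum>g<J. \<Sum>k<K. \<alpha> ((G0+g)*K+k) * relu (t - \<tau> ((G0+g)*K+k))]"
proof -
  let ?q = "\<lambda>g k. (G0+g)*K+k"
  have "(\<Sum>i<2*K+2. L3A 0 i * relu (Sv G0 J \<alpha> i t)) =
     (\<Sum>k<K. relu (Sv G0 J \<alpha> k t)) - (\<Sum>k<K. relu (Sv G0 J \<alpha> (K+k) t)) + relu (Bs G0 J \<alpha> t) - relu (- Bs G0 J \<alpha> t)"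
    using out_sum[of "\<lambda>i. relu (Sv G0 J \<alpha> i t)"] by (simp add: Sv_base Sv_base')
  also have "(\<Sum>k<K. relu (Sv G0 J \<alpha> k t)) - (\<Sum>k<K. relu (Sv G0 J \<alpha> (K+k) t)) =
      (\<Sum>k<K. \<Sum>g<J. \<alpha> (?q g k) * relu (Psi (G0+g) k t))"
  proof -
    have "(\<Sum>k<K. relu (Sv G0 J \<alpha> k t)) - (\<Sum>k<K. relu (Sv G0 J \<alpha> (K+k) t)) =
       (\<Sum>k<K. relu (Sv G0 J \<alpha> k t) - relu (Sv G0 J \<alpha> (K+k) t))" by (simp add: sum_subtractf)
    also have "\<dots> = (\<Sum>k<K. \<Sum>g<J. \<alpha> (?q g k) * relu (Psi (G0+g) k t))"
    proof (intro sum.cong refl)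
      fix k assume "k \<in> {..<K}"
      then have k: "k < K" by simp
      have "relu (Sv G0 J \<alpha> k t) - relu (Sv G0 J \<alpha> (K+k) t) =
         (\<Sum>g<J. max (\<alpha> (?q g k)) 0 * relu (Psi (G0+g) k t) - max (- \<alpha> (?q g k)) 0 * relu (Psi (G0+g) k t))"
        by (simp add: relu_Sv_low[OF k] relu_Sv_high[OF k] sum_subtractf)
      also have "\<dots> = (\<Sum>g<J. \<alpha> (?q g k) * relu (Psi (G0+g) k t))"
        by (intro sum.cong refl) (simp add: max_def algebra_simps)
      finally show "relu (Sv G0 J \<alpha> k t) - relu (Sv G0 J \<alpha> (K+k) t) = (\<Sum>g<J. \<alpha> (?q g k) * relu (Psi (G0+g) k t))" .
    qed
    finally show ?thesis .
  qed
  finally have X: "(\<Sum>i<2*K+2. L3A 0 i * relu (Sv G0 J \<alpha> i t)) =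
      (\<Sum>k<K. \<Sum>g<J. \<alpha> (?q g k) * relu (Psi (G0+g) k t)) + Bs G0 J \<alpha> t"
    using relu_diff[of "Bs G0 J \<alpha> t"] by simp
  also have "\<dots> = (\<Sum>g<J. \<Sum>k<K. \<alpha> (?q g k) * relu (Psi (G0+g) k t) +
       \<alpha> (?q g k) * ((1 + lm (G0+g) k) * relu (t - ee (G0+g)) - lm (G0+g) k * relu (t - lo (Suc (G0+g)))))"
    unfolding Bs_def by (subst sum.swap) (simp add: sum.distrib)
  also have "\<dots> = (\<Sum>g<J. \<Sum>k<K. \<alpha> (?q g k) * relu (t - \<tau> (?q g k)))"
  proof (intro sum.cong refl)
    fix g k assume "k \<in> {..<K}"
    then have k: "k < K" by simp
    show "\<alpha> (?q g k) * relu (Psi (G0+g) k t) +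
       \<alpha> (?q g k) * ((1 + lm (G0+g) k) * relu (t - ee (G0+g)) - lm (G0+g) k * relu (t - lo (Suc (G0+g)))) =
       \<alpha> (?q g k) * relu (t - \<tau> (?q g k))"
      unfolding psi_facts(1)[OF k] by (simp add: tk_def algebra_simps)
  qed
  finally show ?thesis by (simp add: Hnet_Sv)
qed

end



lemma rz_layer_list:
  assumes "layer_dims T1 n w" "layer_dims T2 w m" "w \<le> wm"
  shows "rz n 1 wm m (\<lambda>x. affine T2 (map relu (affine T1 x)))"
  unfolding rz_def using realizes_cons[OF assms(1) realizes_single[OF assms(2)]] assms(3) by force

lemma list2: "length x = 2 \<Longrightarrow> x = [x!0, x!1]"
  by (cases x; cases "tl x") (auto simp: numeral_2_eq_2)
lemma list3: "length x = 3 \<Longrightarrow> x = [x!0, x!1, x!2]"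
  by (cases x; cases "tl x"; cases "tl (tl x)") (auto simp: numeral_3_eq_3)
lemma list4: "length x = 4 \<Longrightarrow> x = [x!0, x!1, x!2, x!3]"
  by (cases x; cases "tl x"; cases "tl (tl x)"; cases "tl (tl (tl x))") (auto simp: eval_nat_numeral)

lemma sum_lt_numeral: "(\<Sum>j<numeral n. f j) = (\<Sum>j<pred_numeral n. f j) + (f (pred_numeral n) :: real)"
  by (simp add: numeral_eq_Suc)

lemma carry2: "rz 2 1 4 2 (\<lambda>x. [x!0, x!1])"
proof -
  have "rz 2 1 4 2 (\<lambda>x. affine ([[1,-1,0,0],[0,0,1,-1]], [0,0]) (map relu (affine ([[1,0],[-1,0],[0,1],[0,-1]], [0,0,0,0]) x)))"
    by (rule rz_layer_list) (auto simp: layer_dims_def)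
  then show ?thesis
  proof (rule rz_cong)
    fix x :: "real list" assume "length x = 2"
    then obtain a b where x: "x = [a, b]" using list2 by blast
    show "affine ([[1,-1,0,0],[0,0,1,-1]], [0,0]) (map relu (affine ([[1,0],[-1,0],[0,1],[0,-1]], [0,0,0,0]) x)) = [x!0, x!1]"
      unfolding x by (simp add: affine_def sum_lt_numeral relu_def max_def)
  qed
qed


lemma rz_eqI: "rz n d wm m F \<Longrightarrow> d = d' \<Longrightarrow> (\<And>x. length x = n \<Longrightarrow> F x = G x) \<Longrightarrow> rz n d' wm m G"
  using rz_cong by blast

lemma rz_par3: "rz n d w1 m1 F1 \<Longrightarrow> rz n d w2 m2 F2 \<Longrightarrow> m1 + m2 = m \<Longrightarrow> rz n d (w1 + w2) m (\<lambda>x. F1 x @ F2 x)"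
  using rz_par by blast

lemma carry2_2: "rz 2 2 4 2 (\<lambda>x. [x!0, x!1])"
  using rz_comp[OF carry2 carry2] by (rule rz_eqI) simp_all

lemma proj0: "length x = 2 \<Longrightarrow> aff 2 1 (\<lambda>i j. if j = 0 then 1 else 0) (\<lambda>_. 0) x = [x!0]"
  by (rule nth_equalityI) (auto simp: eval_nat_numeral)

lemma comb3: "length y = 3 \<Longrightarrow> aff 3 2 (\<lambda>i j. if i = 0 then (if j = 1 then 1 else 0) else (if j = 1 then 0 else 1)) (\<lambda>_. 0) y = [y!1, y!2 + y!0]"
  by (rule nth_equalityI) (auto simp: eval_nat_numeral less_Suc_eq)

context hinge
begin

lemma chunk:
  "rz 2 2 (max (4*J) (2*K+2) + 4) 2
     (\<lambda>x. [x!0, x!1 + (\<Sum>g<J. \<Sum>k<K. \<alpha> ((G0+g)*K+k) * relu (x!0 - \<tau> ((G0+g)*K+k)))])"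
proof -
  have H: "rz 1 2 (max (4*J) (2*K+2)) 1 (Hnet G0 J \<alpha>)"
    unfolding rz_def using Hnet_realizes by force
  have H2: "rz 2 2 (max (4*J) (2*K+2)) 1 (\<lambda>x. Hnet G0 J \<alpha> (aff 2 1 (\<lambda>i j. if j = 0 then 1 else 0) (\<lambda>_. 0) x))"
    by (rule rz_pre_aff[OF H])
  have P: "rz 2 2 (max (4*J) (2*K+2) + 4) 3
     (\<lambda>x. Hnet G0 J \<alpha> (aff 2 1 (\<lambda>i j. if j = 0 then 1 else 0) (\<lambda>_. 0) x) @ [x!0, x!1])"
    by (rule rz_par3[OF H2 carry2_2]) simp
  have P2: "rz 2 2 (max (4*J) (2*K+2) + 4) 2
     (\<lambda>x. aff 3 2 (\<lambda>i j. if i = 0 then (if j = 1 then 1 else 0) else (if j = 1 then 0 else 1)) (\<lambda>_. 0)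
        (Hnet G0 J \<alpha> (aff 2 1 (\<lambda>i j. if j = 0 then 1 else 0) (\<lambda>_. 0) x) @ [x!0, x!1]))"
    by (rule rz_post_aff[OF P])
  show ?thesis
  proof (rule rz_cong[OF P2])
    fix x :: "real list" assume x: "length x = 2"
    have l: "length (Hnet G0 J \<alpha> (aff 2 1 (\<lambda>i j. if j = 0 then 1 else 0) (\<lambda>_. 0) x) @ [x!0, x!1]) = 3"
      unfolding proj0[OF x] by (simp add: Hnet_eval)
    show "aff 3 2 (\<lambda>i j. if i = 0 then (if j = 1 then 1 else 0) else (if j = 1 then 0 else 1)) (\<lambda>_. 0)
        (Hnet G0 J \<alpha> (aff 2 1 (\<lambda>i j. if j = 0 then 1 else 0) (\<lambda>_. 0) x) @ [x!0, x!1]) =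
      [x!0, x!1 + (\<Sum>g<J. \<Sum>k<K. \<alpha> ((G0+g)*K+k) * relu (x!0 - \<tau> ((G0+g)*K+k)))]"
      unfolding proj0[OF x] Hnet_eval by (subst comb3) simp_all
  qed
qed

definition "chunkf \<alpha> J c t = (\<Sum>g<J. \<Sum>k<K. \<alpha> ((c*J+g)*K+k) * relu (t - \<tau> ((c*J+g)*K+k)))"

lemma stack:
  "rz 2 (2*C) (max (4*J) (2*K+2) + 4) 2 (\<lambda>x. [x!0, x!1 + (\<Sum>c<C. chunkf \<alpha> J c (x!0))])"
proof (induction C)
  case 0
  have "rz 2 0 (max (4*J) (2*K+2) + 4) 2 (aff 2 2 (\<lambda>i j. if i = j then 1 else 0) (\<lambda>_. 0))" by (rule rz_aff)
  then show ?case
    by (rule rz_eqI) (simp, rule nth_equalityI, auto simp: eval_nat_numeral less_Suc_eq)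
next
  case (Suc C)
  have "rz 2 (2*C + 2) (max (4*J) (2*K+2) + 4) 2
     (\<lambda>x. (\<lambda>y. [y!0, y!1 + (\<Sum>g<J. \<Sum>k<K. \<alpha> ((C*J+g)*K+k) * relu (y!0 - \<tau> ((C*J+g)*K+k)))])
         ([x!0, x!1 + (\<Sum>c<C. chunkf \<alpha> J c (x!0))]))"
    by (rule rz_comp[OF Suc.IH chunk])
  then show ?case by (rule rz_eqI) (simp_all add: chunkf_def)
qed

lemma stack_sum: "(\<Sum>c<C. chunkf \<alpha> J c t) = (\<Sum>q<K*(J*C). \<alpha> q * relu (t - \<tau> q))"
proof -
  have "(\<Sum>q<K*(J*C). \<alpha> q * relu (t - \<tau> q)) = (\<Sum>i<J*C. \<Sum>k<K. \<alpha> (K*i+k) * relu (t - \<tau> (K*i+k)))"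
    by (rule sum_group)
  also have "\<dots> = (\<Sum>c<C. \<Sum>g<J. \<Sum>k<K. \<alpha> (K*(J*c+g)+k) * relu (t - \<tau> (K*(J*c+g)+k)))"
    by (rule sum_group)
  finally show ?thesis unfolding chunkf_def by (simp add: algebra_simps)
qed

lemma stageA:
  "rz 1 (2*C) (max (4*J) (2*K+2) + 4) 2 (\<lambda>x. [x!0, a0 + (\<Sum>q<K*(J*C). \<alpha> q * relu (x!0 - \<tau> q))])"
proof -
  have "rz 1 (2*C) (max (4*J) (2*K+2) + 4) 2
    (\<lambda>x. (\<lambda>y. [y!0, y!1 + (\<Sum>c<C. chunkf \<alpha> J c (y!0))]) (aff 1 2 (\<lambda>i j. if i = 0 then 1 else 0) (\<lambda>i. if i = 0 then 0 else a0) x))"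
    by (rule rz_pre_aff[OF stack])
  then show ?thesis by (rule rz_cong) (simp add: stack_sum eval_nat_numeral)
qed

end



definition tent :: "real \<Rightarrow> real" where "tent y = 2 * relu y - 4 * relu (y - 1/2)"

lemma tent_layer: "rz 3 1 8 3 (\<lambda>x. [tent (x!0), x!1, x!2])"
proof -
  have "rz 3 1 8 3 (\<lambda>x. affine ([[2,-4,0,0,0,0],[0,0,1,-1,0,0],[0,0,0,0,1,-1]], [0,0,0])
     (map relu (affine ([[1,0,0],[1,0,0],[0,1,0],[0,-1,0],[0,0,1],[0,0,-1]], [0,-1/2,0,0,0,0]) x)))"
    by (rule rz_layer_list) (auto simp: layer_dims_def)
  then show ?thesis
  proof (rule rz_cong)
    fix x :: "real list" assume "length x = 3"
    then obtain a b c where x: "x = [a, b, c]" using list3 by blast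
    show "affine ([[2,-4,0,0,0,0],[0,0,1,-1,0,0],[0,0,0,0,1,-1]], [0,0,0])
     (map relu (affine ([[1,0,0],[1,0,0],[0,1,0],[0,-1,0],[0,0,1],[0,0,-1]], [0,-1/2,0,0,0,0]) x)) = [tent (x!0), x!1, x!2]"
      unfolding x by (simp add: affine_def sum_lt_numeral tent_def relu_def max_def)
  qed
qed

lemma rz_id3: "rz 3 0 w 3 (\<lambda>x. [x!0, x!1, x!2])"
proof -
  have "rz 3 0 w 3 (aff 3 3 (\<lambda>i j. if i = j then 1 else 0) (\<lambda>_. 0))" by (rule rz_aff)
  then show ?thesis
    by (rule rz_cong) (rule nth_equalityI, auto simp: eval_nat_numeral less_Suc_eq)
qed

lemma tent_iter: "rz 3 P 8 3 (\<lambda>x. [(tent ^^ P) (x!0), x!1, x!2])"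
proof (induction P)
  case 0
  then show ?case using rz_id3 by simp
next
  case (Suc P)
  have "rz 3 (P + 1) 8 3 (\<lambda>x. (\<lambda>y. [tent (y!0), y!1, y!2]) ([(tent ^^ P) (x!0), x!1, x!2]))"
    by (rule rz_comp[OF Suc.IH tent_layer])
  then show ?case by (rule rz_eqI) simp_all
qed

lemma dist_layer: "rz 3 1 8 4 (\<lambda>x. [x!0, x!1, x!2, \<bar>x!1 - r0\<bar>])"
proof -
  have "rz 3 1 8 4 (\<lambda>x. affine ([[1,-1,0,0,0,0,0,0],[0,0,1,-1,0,0,0,0],[0,0,0,0,1,-1,0,0],[0,0,0,0,0,0,1,1]], [0,0,0,0])
     (map relu (affine ([[1,0,0],[-1,0,0],[0,1,0],[0,-1,0],[0,0,1],[0,0,-1],[0,1,0],[0,-1,0]], [0,0,0,0,0,0,-r0,r0]) x)))"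
    by (rule rz_layer_list) (auto simp: layer_dims_def)
  then show ?thesis
  proof (rule rz_cong)
    fix x :: "real list" assume "length x = 3"
    then obtain a b c where x: "x = [a, b, c]" using list3 by blast
    show "affine ([[1,-1,0,0,0,0,0,0],[0,0,1,-1,0,0,0,0],[0,0,0,0,1,-1,0,0],[0,0,0,0,0,0,1,1]], [0,0,0,0])
     (map relu (affine ([[1,0,0],[-1,0,0],[0,1,0],[0,-1,0],[0,0,1],[0,0,-1],[0,1,0],[0,-1,0]], [0,0,0,0,0,0,-r0,r0]) x)) = [x!0, x!1, x!2, \<bar>x!1 - r0\<bar>]"
      unfolding x by (simp add: affine_def sum_lt_numeral relu_def max_def)
  qed
qed

lemma selr_layer: "rz 4 1 8 3 (\<lambda>x. [x!0, x!1, x!2 + relu (x!0 - x!3)])"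
proof -
  have "rz 4 1 8 3 (\<lambda>x. affine ([[1,-1,0,0,0,0,0],[0,0,1,-1,0,0,0],[0,0,0,0,1,-1,1]], [0,0,0])
     (map relu (affine ([[1,0,0,0],[-1,0,0,0],[0,1,0,0],[0,-1,0,0],[0,0,1,0],[0,0,-1,0],[1,0,0,-1]], [0,0,0,0,0,0,0]) x)))"
    by (rule rz_layer_list) (auto simp: layer_dims_def)
  then show ?thesis
  proof (rule rz_cong)
    fix x :: "real list" assume "length x = 4"
    then obtain a b c d where x: "x = [a, b, c, d]" using list4 by blast
    show "affine ([[1,-1,0,0,0,0,0],[0,0,1,-1,0,0,0],[0,0,0,0,1,-1,1]], [0,0,0])
     (map relu (affine ([[1,0,0,0],[-1,0,0,0],[0,1,0,0],[0,-1,0,0],[0,0,1,0],[0,0,-1,0],[1,0,0,-1]], [0,0,0,0,0,0,0]) x)) = [x!0, x!1, x!2 + relu (x!0 - x!3)]"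
      unfolding x by (simp add: affine_def sum_lt_numeral relu_def max_def)
  qed
qed

lemma sel_step: "rz 3 2 8 3 (\<lambda>x. [x!0, x!1, x!2 + relu (x!0 - \<bar>x!1 - r0\<bar>)])"
  using rz_comp[OF dist_layer[of r0] selr_layer] by (rule rz_eqI) simp_all

lemma final_layer: "rz 3 1 8 1 (\<lambda>x. [relu (x!2) - relu (x!2 - 1)])"
proof -
  have "rz 3 1 8 1 (\<lambda>x. affine ([[1,-1]], [0]) (map relu (affine ([[0,0,1],[0,0,1]], [0,-1]) x)))"
    by (rule rz_layer_list) (auto simp: layer_dims_def)
  then show ?thesis
  proof (rule rz_cong)
    fix x :: "real list" assume "length x = 3"
    then obtain a b c where x: "x = [a, b, c]" using list3 by blast
    show "affine ([[1,-1]], [0]) (map relu (affine ([[0,0,1],[0,0,1]], [0,-1]) x)) = [relu (x!2) - relu (x!2 - 1)]"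
      unfolding x by (simp add: affine_def sum_lt_numeral)
  qed
qed

definition "SBsum P k y \<rho> = (\<Sum>r0<Suc k. relu ((tent ^^ (r0 * P)) y - \<bar>\<rho> - real r0\<bar>))"

lemma SB_net: "rz 3 (2 * Suc k + k * P) 8 3 (\<lambda>x. [(tent ^^ (k * P)) (x!0), x!1, x!2 + SBsum P k (x!0) (x!1)])"
proof (induction k)
  case 0
  show ?case using sel_step[of 0] by (rule rz_eqI) (simp_all add: SBsum_def)
next
  case (Suc k)
  have "rz 3 ((2 * Suc k + k * P) + P) 8 3 (\<lambda>x. (\<lambda>y. [(tent ^^ P) (y!0), y!1, y!2]) ([(tent ^^ (k * P)) (x!0), x!1, x!2 + SBsum P k (x!0) (x!1)]))"
    by (rule rz_comp[OF Suc.IH tent_iter])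
  from rz_comp[OF this sel_step[of "real (Suc k)"]]
  show ?case
    by (rule rz_eqI) (simp_all add: SBsum_def funpow_add algebra_simps)
qed



lemma tent_lip: "\<bar>tent x - tent y\<bar> \<le> 2 * \<bar>x - y\<bar>"
  unfolding tent_def relu_def
  by (cases "x \<le> 0"; cases "x \<le> 1/2"; cases "y \<le> 0"; cases "y \<le> 1/2") (auto simp: max_def abs_if)

lemma tent_range: "0 \<le> x \<Longrightarrow> x \<le> 1 \<Longrightarrow> 0 \<le> tent x \<and> tent x \<le> 1"
  unfolding tent_def relu_def by (auto simp: max_def)

lemma tent_iter_lip: "\<bar>(tent ^^ n) x - (tent ^^ n) y\<bar> \<le> 2 ^ n * \<bar>x - y\<bar>"
proof (induction n)
  case 0 then show ?case by simp
next
  case (Suc n)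
  have "\<bar>(tent ^^ Suc n) x - (tent ^^ Suc n) y\<bar> \<le> 2 * \<bar>(tent ^^ n) x - (tent ^^ n) y\<bar>"
    by (simp add: tent_lip)
  also have "\<dots> \<le> 2 * (2 ^ n * \<bar>x - y\<bar>)" using Suc by simp
  finally show ?case by simp
qed

lemma tent_iter_range: "0 \<le> x \<Longrightarrow> x \<le> 1 \<Longrightarrow> 0 \<le> (tent ^^ n) x \<and> (tent ^^ n) x \<le> 1"
  by (induction n) (auto simp: tent_range)

lemma tent_preimage:
  "0 \<le> y \<Longrightarrow> y \<le> 1 \<Longrightarrow> 0 \<le> z \<Longrightarrow> z \<le> 1 \<Longrightarrow>
   \<exists>x. 0 \<le> x \<and> x \<le> 1 \<and> \<bar>x - z\<bar> \<le> 1 / 2 ^ n \<and> (tent ^^ n) x = y"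
proof (induction n arbitrary: z)
  case 0
  then show ?case by (intro exI[of _ y]) auto
next
  case (Suc n)
  have tz: "0 \<le> tent z" "tent z \<le> 1" using tent_range Suc.prems by auto
  obtain x' where x': "0 \<le> x'" "x' \<le> 1" "\<bar>x' - tent z\<bar> \<le> 1 / 2 ^ n" "(tent ^^ n) x' = y"
    using Suc.IH[OF Suc.prems(1,2) tz] by blast
  show ?case
  proof (cases "z \<le> 1/2")
    case True
    have tzv: "tent z = 2 * z" using True Suc.prems unfolding tent_def relu_def by (auto simp: max_def)
    have tx: "tent (x'/2) = x'" using x' unfolding tent_def relu_def by (auto simp: max_def)
    have "\<bar>x'/2 - z\<bar> = \<bar>x' - tent z\<bar> / 2" unfolding tzv by (simp add: abs_if field_simps)
    also have "\<dots> \<le> (1 / 2 ^ n) / 2" using x'(3) by simp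
    finally have "\<bar>x'/2 - z\<bar> \<le> 1 / 2 ^ Suc n" by simp
    moreover have "(tent ^^ Suc n) (x'/2) = y" unfolding funpow_Suc_right comp_def tx x'(4) ..
    ultimately show ?thesis using x' by (intro exI[of _ "x'/2"]) auto
  next
    case False
    have tzv: "tent z = 2 - 2 * z" using False Suc.prems unfolding tent_def relu_def by (auto simp: max_def)
    have tx: "tent (1 - x'/2) = x'" using x' unfolding tent_def relu_def by (auto simp: max_def)
    have "\<bar>(1 - x'/2) - z\<bar> = \<bar>x' - tent z\<bar> / 2" unfolding tzv by (simp add: abs_if field_simps)
    also have "\<dots> \<le> (1 / 2 ^ n) / 2" using x'(3) by simp
    finally have "\<bar>(1 - x'/2) - z\<bar> \<le> 1 / 2 ^ Suc n" by simp
    moreover have "(tent ^^ Suc n) (1 - x'/2) = y" unfolding funpow_Suc_right comp_def tx x'(4) ..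
    ultimately show ?thesis using x' by (intro exI[of _ "1 - x'/2"]) auto
  qed
qed

lemma tent_encode:
  "(\<And>r. r \<le> k \<Longrightarrow> 0 \<le> z r \<and> z r \<le> 1) \<Longrightarrow>
   \<exists>x. 0 \<le> x \<and> x \<le> 1 \<and> (\<forall>r\<le>k. \<bar>(tent ^^ (r * P)) x - z r\<bar> \<le> 1 / 2 ^ P)"
proof (induction k arbitrary: z)
  case 0
  then show ?case by (intro exI[of _ "z 0"]) auto
next
  case (Suc k)
  obtain x' where x': "0 \<le> x'" "x' \<le> 1" "\<forall>r\<le>k. \<bar>(tent ^^ (r * P)) x' - z (Suc r)\<bar> \<le> 1 / 2 ^ P"
    using Suc.IH[of "\<lambda>r. z (Suc r)"] Suc.prems by auto
  have z0: "0 \<le> z 0" "z 0 \<le> 1" using Suc.prems by auto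
  obtain x where x: "0 \<le> x" "x \<le> 1" "\<bar>x - z 0\<bar> \<le> 1 / 2 ^ P" "(tent ^^ P) x = x'"
    using tent_preimage[OF x'(1,2) z0] by blast
  have "\<forall>r\<le>Suc k. \<bar>(tent ^^ (r * P)) x - z r\<bar> \<le> 1 / 2 ^ P"
  proof (intro allI impI)
    fix r assume r: "r \<le> Suc k"
    show "\<bar>(tent ^^ (r * P)) x - z r\<bar> \<le> 1 / 2 ^ P"
    proof (cases r)
      case 0 then show ?thesis using x by simp
    next
      case (Suc r')
      have e: "r * P = r' * P + P" using Suc by simp
      have "(tent ^^ (r * P)) x = (tent ^^ (r' * P)) ((tent ^^ P) x)"
        by (simp only: e funpow_add comp_def)
      then show ?thesis using x'(3) x(4) r Suc by simp
    qed
  qed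
  then show ?case using x by blast
qed



definition cl01 :: "real \<Rightarrow> real" where "cl01 u = max 0 (min 1 u)"
definition ramp :: "nat \<Rightarrow> nat \<Rightarrow> real \<Rightarrow> real" where "ramp R m t = cl01 (2 * (t - real (m * R)) + 1)"

lemma ramp_hinge: "ramp R m t = 2 * relu (t - (real (m * R) - 1/2)) - 2 * relu (t - real (m * R))"
  unfolding ramp_def cl01_def relu_def by (auto simp: max_def min_def)

lemma ramp_one: "real (m * R) \<le> t \<Longrightarrow> ramp R m t = 1"
  unfolding ramp_def cl01_def by auto

lemma ramp_zero: "t \<le> real (m * R) - 1/2 \<Longrightarrow> ramp R m t = 0"
  unfolding ramp_def cl01_def by auto

lemma ramp_range: "0 \<le> ramp R m t" "ramp R m t \<le> 1"
  unfolding ramp_def cl01_def by auto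

definition "cl s t c = max s (min t (c::real))"

lemma ramp_inc_aux:
  fixes a b s t :: real
  assumes "s \<le> t" "a + 1/2 \<le> b"
  shows "0 \<le> cl01 (2 * (t - a)) - cl01 (2 * (s - a))"
    and "cl01 (2 * (t - a)) - cl01 (2 * (s - a)) \<le> 2 * (cl s t b - cl s t a)"
  using assms unfolding cl01_def cl_def by (auto simp: max_def min_def)

lemma ramp_inc:
  assumes "s \<le> t" "1 \<le> R"
  shows "0 \<le> ramp R m t - ramp R m s"
    and "ramp R m t - ramp R m s \<le> 2 * (cl s t (real (Suc m * R) - 1/2) - cl s t (real (m * R) - 1/2))"
proof -
  have e: "2 * (x - real (m * R)) + 1 = 2 * (x - (real (m * R) - 1/2))" for x by simp
  have b: "(real (m * R) - 1/2) + 1/2 \<le> real (Suc m * R) - 1/2" using assms(2) by simp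
  show "0 \<le> ramp R m t - ramp R m s"
    unfolding ramp_def e by (rule ramp_inc_aux(1)[OF assms(1) b])
  show "ramp R m t - ramp R m s \<le> 2 * (cl s t (real (Suc m * R) - 1/2) - cl s t (real (m * R) - 1/2))"
    unfolding ramp_def e by (rule ramp_inc_aux(2)[OF assms(1) b])
qed

definition "Xf R Nb xs t = xs 0 + (\<Sum>i<Nb - 1. (xs (Suc i) - xs i) * ramp R (Suc i) t)"
definition "Ff R Nb t = (\<Sum>i<Nb - 1. ramp R (Suc i) t)"
definition "rf R Nb t = t - real R * Ff R Nb t"

lemma F_inc:
  assumes "s \<le> t" "1 \<le> R"
  shows "0 \<le> Ff R Nb t - Ff R Nb s" "Ff R Nb t - Ff R Nb s \<le> 2 * (t - s)"
proof -
  define c where "c i = cl s t (real (Suc i * R) - 1/2)" for i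
  have "Ff R Nb t - Ff R Nb s = (\<Sum>i<Nb - 1. ramp R (Suc i) t - ramp R (Suc i) s)"
    unfolding Ff_def by (simp add: sum_subtractf)
  note D = this
  show "0 \<le> Ff R Nb t - Ff R Nb s" unfolding D by (rule sum_nonneg) (use ramp_inc(1)[OF assms] in auto)
  have "(\<Sum>i<Nb - 1. ramp R (Suc i) t - ramp R (Suc i) s) \<le> (\<Sum>i<Nb - 1. 2 * (c (Suc i) - c i))"
  proof (rule sum_mono)
    fix i
    show "ramp R (Suc i) t - ramp R (Suc i) s \<le> 2 * (c (Suc i) - c i)"
      using ramp_inc(2)[OF assms, of "Suc i"] unfolding c_def by simp
  qed
  also have "\<dots> = 2 * (c (Nb - 1) - c 0)"
    by (simp only: sum_distrib_left[symmetric] sum_lessThan_telescope)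
  also have "\<dots> \<le> 2 * (t - s)" using assms(1) unfolding c_def cl_def by (auto simp: max_def min_def)
  finally show "Ff R Nb t - Ff R Nb s \<le> 2 * (t - s)" unfolding D .
qed

lemma X_lip_aux:
  assumes "s \<le> t" "1 \<le> R" "\<And>i. 0 \<le> xs i \<and> xs i \<le> 1"
  shows "\<bar>Xf R Nb xs t - Xf R Nb xs s\<bar> \<le> 2 * (t - s)"
proof -
  have "Xf R Nb xs t - Xf R Nb xs s = (\<Sum>i<Nb - 1. (xs (Suc i) - xs i) * ramp R (Suc i) t) - (\<Sum>i<Nb - 1. (xs (Suc i) - xs i) * ramp R (Suc i) s)"
    unfolding Xf_def by simp
  also have "\<dots> = (\<Sum>i<Nb - 1. (xs (Suc i) - xs i) * (ramp R (Suc i) t - ramp R (Suc i) s))"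
    by (simp add: sum_subtractf[symmetric] right_diff_distrib)
  finally have "Xf R Nb xs t - Xf R Nb xs s = (\<Sum>i<Nb - 1. (xs (Suc i) - xs i) * (ramp R (Suc i) t - ramp R (Suc i) s))" .
  then have "\<bar>Xf R Nb xs t - Xf R Nb xs s\<bar> \<le> (\<Sum>i<Nb - 1. \<bar>(xs (Suc i) - xs i) * (ramp R (Suc i) t - ramp R (Suc i) s)\<bar>)"
    using sum_abs by (metis)
  also have "\<dots> \<le> (\<Sum>i<Nb - 1. ramp R (Suc i) t - ramp R (Suc i) s)"
  proof (rule sum_mono)
    fix i
    have d: "\<bar>xs (Suc i) - xs i\<bar> \<le> 1" using assms(3)[of i] assms(3)[of "Suc i"] by auto
    have p: "0 \<le> ramp R (Suc i) t - ramp R (Suc i) s" by (rule ramp_inc(1)[OF assms(1,2)])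
    have "\<bar>(xs (Suc i) - xs i) * (ramp R (Suc i) t - ramp R (Suc i) s)\<bar> = \<bar>xs (Suc i) - xs i\<bar> * (ramp R (Suc i) t - ramp R (Suc i) s)"
      using p by (simp add: abs_mult)
    also have "\<dots> \<le> 1 * (ramp R (Suc i) t - ramp R (Suc i) s)" using d p by (rule mult_right_mono)
    finally show "\<bar>(xs (Suc i) - xs i) * (ramp R (Suc i) t - ramp R (Suc i) s)\<bar> \<le> ramp R (Suc i) t - ramp R (Suc i) s" by simp
  qed
  also have "\<dots> = Ff R Nb t - Ff R Nb s" unfolding Ff_def by (simp add: sum_subtractf)
  also have "\<dots> \<le> 2 * (t - s)" by (rule F_inc(2)[OF assms(1,2)])
  finally show ?thesis .
qed

lemma X_lip:
  assumes "1 \<le> R" "\<And>i. 0 \<le> xs i \<and> xs i \<le> 1"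
  shows "\<bar>Xf R Nb xs t - Xf R Nb xs s\<bar> \<le> 2 * \<bar>t - s\<bar>"
proof (cases "s \<le> t")
  case True then show ?thesis using X_lip_aux[OF True assms] by simp
next
  case False then show ?thesis using X_lip_aux[of t s, OF _ assms] by (simp add: abs_minus_commute)
qed

lemma r_lip_aux:
  assumes "s \<le> t" "1 \<le> R"
  shows "\<bar>rf R Nb t - rf R Nb s\<bar> \<le> (2 * real R - 1) * (t - s)"
proof -
  have a: "0 \<le> Ff R Nb t - Ff R Nb s" "Ff R Nb t - Ff R Nb s \<le> 2 * (t - s)" using F_inc[OF assms] by auto
  have e: "rf R Nb t - rf R Nb s = (t - s) - real R * (Ff R Nb t - Ff R Nb s)" unfolding rf_def by (simp add: algebra_simps)
  have R1: "real R \<ge> 1" using assms(2) by simp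
  have u: "real R * (Ff R Nb t - Ff R Nb s) \<le> real R * (2 * (t - s))" using a(2) R1 by (intro mult_left_mono) auto
  have l: "0 \<le> real R * (Ff R Nb t - Ff R Nb s)" using a(1) R1 by simp
  define Y where "Y = 2 * real R * (t - s)"
  define Z where "Z = (2 * real R - 1) * (t - s)"
  define E where "E = real R * (Ff R Nb t - Ff R Nb s)"
  have m: "Z = Y - (t - s)" unfolding Z_def Y_def by (simp add: algebra_simps)
  have n: "1 * (t - s) \<le> Z" unfolding Z_def using R1 assms(1) by (intro mult_right_mono) auto
  have u2: "E \<le> Y" using u unfolding E_def Y_def by (simp add: algebra_simps)
  have l2: "0 \<le> E" using l unfolding E_def .
  have "\<bar>(t - s) - E\<bar> \<le> Z" using m n u2 l2 by (simp add: abs_le_iff)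
  then show ?thesis unfolding e E_def Z_def .
qed

lemma r_lip:
  assumes "1 \<le> R"
  shows "\<bar>rf R Nb t - rf R Nb s\<bar> \<le> (2 * real R - 1) * \<bar>t - s\<bar>"
proof (cases "s \<le> t")
  case True then show ?thesis using r_lip_aux[OF True assms] by simp
next
  case False then show ?thesis using r_lip_aux[of t s, OF _ assms] by (simp add: abs_minus_commute)
qed

lemma sum_ramp_at:
  assumes "m \<le> n" "real (m * R) \<le> t" "t \<le> real (m * R + R) - 1" "1 \<le> R"
  shows "(\<Sum>i<n. f i * ramp R (Suc i) t) = (\<Sum>i<m. f i)"
proof -
  have "(\<Sum>i<n. f i * ramp R (Suc i) t) = (\<Sum>i<n. if i < m then f i else 0)"
  proof (rule sum.cong[OF refl])
    fix i assume "i \<in> {..<n}"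
    show "f i * ramp R (Suc i) t = (if i < m then f i else 0)"
    proof (cases "i < m")
      case True
      then have "Suc i * R \<le> m * R" by (intro mult_le_mono1) simp
      then have "real (Suc i * R) \<le> real (m * R)" by (rule of_nat_mono)
      then have "real (Suc i * R) \<le> t" using assms(2) by linarith
      then show ?thesis using True by (simp add: ramp_one)
    next
      case False
      then have "Suc m * R \<le> Suc i * R" by (intro mult_le_mono1) simp
      then have "real (Suc m * R) \<le> real (Suc i * R)" by (rule of_nat_mono)
      moreover have "real (Suc m * R) = real (m * R + R)" by simp
      ultimately have "real (m * R + R) \<le> real (Suc i * R)" by simp
      then have "t \<le> real (Suc i * R) - 1/2" using assms(3) by linarith
      then show ?thesis using False by (simp add: ramp_zero)
    qed
  qed
  also have "\<dots> = (\<Sum>i<m. f i)"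
  proof -
    have "(\<Sum>i<n. if i < m then f i else 0) = (\<Sum>i<m + (n - m). if i < m then f i else 0)" using assms(1) by simp
    also have "\<dots> = (\<Sum>i<m. f i)" by (simp add: sum_split_add)
    finally show ?thesis .
  qed
  finally show ?thesis .
qed

lemma data_point:
  assumes "m < Nb" "\<rho> < R" "1 \<le> R"
  shows "Xf R Nb xs (real (m * R + \<rho>)) = xs m" "rf R Nb (real (m * R + \<rho>)) = real \<rho>"
proof -
  have t1: "real (m * R) \<le> real (m * R + \<rho>)" by simp
  have t2: "real (m * R + \<rho>) \<le> real (m * R + R) - 1" using assms(2) by simp
  have m: "m \<le> Nb - 1" using assms(1) by simp
  show "Xf R Nb xs (real (m * R + \<rho>)) = xs m"
    unfolding Xf_def sum_ramp_at[OF m t1 t2 assms(3)] by (simp add: sum_lessThan_telescope)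
  have "Ff R Nb (real (m * R + \<rho>)) = real m"
    unfolding Ff_def using sum_ramp_at[OF m t1 t2 assms(3), of "\<lambda>_. 1"] by simp
  then show "rf R Nb (real (m * R + \<rho>)) = real \<rho>" unfolding rf_def by simp
qed

lemma X_range:
  assumes "1 \<le> R" "\<And>i. 0 \<le> xs i \<and> xs i \<le> 1"
  shows "0 \<le> Xf R Nb xs t \<and> Xf R Nb xs t \<le> 1"
proof -
  define Xn where "Xn n = xs 0 + (\<Sum>i<n. (xs (Suc i) - xs i) * ramp R (Suc i) t)" for n
  have "0 \<le> Xn n \<and> Xn n \<le> 1" for n
  proof (induction n)
    case 0 then show ?case using assms(2)[of 0] by (simp add: Xn_def)
  next
    case (Suc n)
    have S: "Xn (Suc n) = Xn n + (xs (Suc n) - xs n) * ramp R (Suc n) t" by (simp add: Xn_def)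
    show ?case
    proof (cases "t \<le> real (Suc n * R) - 1/2")
      case True
      then show ?thesis using S Suc by (simp add: ramp_zero)
    next
      case False
      have "real (n * R) \<le> real (Suc n * R) - 1/2" using assms(1) by simp
      then have tn: "real (n * R) \<le> t" using False by linarith
      have "\<forall>i<n. ramp R (Suc i) t = 1"
      proof (intro allI impI)
        fix i assume "i < n"
        then have "Suc i * R \<le> n * R" by (intro mult_le_mono1) simp
        then have "real (Suc i * R) \<le> real (n * R)" by (rule of_nat_mono)
        then have "real (Suc i * R) \<le> t" using tn by linarith
        then show "ramp R (Suc i) t = 1" by (rule ramp_one)
      qed
      then have "Xn n = xs 0 + (\<Sum>i<n. (xs (Suc i) - xs i))" unfolding Xn_def by simp
      then have Xn: "Xn n = xs n" by (simp add: sum_lessThan_telescope)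
      let ?l = "ramp R (Suc n) t"
      have l: "0 \<le> ?l" "?l \<le> 1" by (rule ramp_range)+
      have "Xn (Suc n) = (1 - ?l) * xs n + ?l * xs (Suc n)" unfolding S Xn by (simp add: algebra_simps)
      moreover have "0 \<le> (1 - ?l) * xs n + ?l * xs (Suc n)" using l assms(2)[of n] assms(2)[of "Suc n"] by simp
      moreover have "(1 - ?l) * xs n + ?l * xs (Suc n) \<le> (1 - ?l) * 1 + ?l * 1"
        using l assms(2)[of n] assms(2)[of "Suc n"] by (intro add_mono mult_left_mono) auto
      ultimately show ?thesis by simp
    qed
  qed
  then show ?thesis unfolding Xf_def Xn_def by simp
qed

definition "tauf R q = real ((q div 2 + 1) * R) - (if even q then 1/2 else 0)"
definition "aX Nb xs q = (if q < 2 * (Nb - 1) then (if even q then 2 else -2) * (xs (q div 2 + 1) - xs (q div 2)) else (0::real))"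
definition "aR R Nb q = (if q < 2 * (Nb - 1) then (if even q then - 2 * real R else 2 * real R) else 0)"

lemma tauf_gap: "1 \<le> R \<Longrightarrow> tauf R q + 1/2 \<le> tauf R (Suc q)"
  unfolding tauf_def by (cases "even q") (auto elim!: evenE oddE simp: algebra_simps)

lemma hinge_sum_pairs:
  assumes "2 * (Nb - 1) \<le> M" "\<And>q. 2 * (Nb - 1) \<le> q \<Longrightarrow> a q = 0"
  shows "(\<Sum>q<M. a q * relu (t - tauf R q)) = (\<Sum>i<Nb - 1. a (2*i) * relu (t - tauf R (2*i)) + a (2*i+1) * relu (t - tauf R (2*i+1)))"
proof -
  have "(\<Sum>q<M. a q * relu (t - tauf R q)) = (\<Sum>q<2 * (Nb - 1) + (M - 2 * (Nb - 1)). a q * relu (t - tauf R q))"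
    using assms(1) by simp
  also have "\<dots> = (\<Sum>q<2 * (Nb - 1). a q * relu (t - tauf R q))"
    by (simp add: sum_split_add assms(2))
  also have "\<dots> = (\<Sum>i<Nb - 1. \<Sum>e<2. a (2*i+e) * relu (t - tauf R (2*i+e)))" by (rule sum_group)
  finally show ?thesis by (simp add: numeral_2_eq_2)
qed

lemma hinge_X:
  assumes "2 * (Nb - 1) \<le> M"
  shows "xs 0 + (\<Sum>q<M. aX Nb xs q * relu (t - tauf R q)) = Xf R Nb xs t"
proof -
  have "(\<Sum>q<M. aX Nb xs q * relu (t - tauf R q)) = (\<Sum>i<Nb - 1. aX Nb xs (2*i) * relu (t - tauf R (2*i)) + aX Nb xs (2*i+1) * relu (t - tauf R (2*i+1)))"
    by (rule hinge_sum_pairs[OF assms]) (simp add: aX_def)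
  also have "\<dots> = (\<Sum>i<Nb - 1. (xs (Suc i) - xs i) * ramp R (Suc i) t)"
  proof (rule sum.cong[OF refl])
    fix i assume "i \<in> {..<Nb - 1}"
    then have i: "2*i < 2*(Nb-1)" "2*i+1 < 2*(Nb-1)" by auto
    have d1: "(2*i) div 2 = i" "(2*i+1) div 2 = i" by auto
    show "aX Nb xs (2*i) * relu (t - tauf R (2*i)) + aX Nb xs (2*i+1) * relu (t - tauf R (2*i+1)) = (xs (Suc i) - xs i) * ramp R (Suc i) t"
      unfolding aX_def tauf_def ramp_hinge using i by (simp add: d1 algebra_simps)
  qed
  finally show ?thesis unfolding Xf_def by simp
qed

lemma hinge_R:
  assumes "2 * (Nb - 1) \<le> M"
  shows "t + (\<Sum>q<M. aR R Nb q * relu (t - tauf R q)) = rf R Nb t"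
proof -
  have "(\<Sum>q<M. aR R Nb q * relu (t - tauf R q)) = (\<Sum>i<Nb - 1. aR R Nb (2*i) * relu (t - tauf R (2*i)) + aR R Nb (2*i+1) * relu (t - tauf R (2*i+1)))"
    by (rule hinge_sum_pairs[OF assms]) (simp add: aR_def)
  also have "\<dots> = (\<Sum>i<Nb - 1. - real R * ramp R (Suc i) t)"
  proof (rule sum.cong[OF refl])
    fix i assume "i \<in> {..<Nb - 1}"
    then have i: "2*i < 2*(Nb-1)" "2*i+1 < 2*(Nb-1)" by auto
    have d1: "(2*i) div 2 = i" "(2*i+1) div 2 = i" by auto
    show "aR R Nb (2*i) * relu (t - tauf R (2*i)) + aR R Nb (2*i+1) * relu (t - tauf R (2*i+1)) = - real R * ramp R (Suc i) t"
      unfolding aR_def tauf_def ramp_hinge using i by (simp add: d1 algebra_simps)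
  qed
  finally show ?thesis unfolding rf_def Ff_def by (simp add: sum_distrib_left sum_negf)
qed



lemma relu_lip: "\<bar>relu a - relu b\<bar> \<le> \<bar>a - b\<bar>"
  unfolding relu_def by (auto simp: max_def)

lemma clamp_lip: "\<bar>(relu a - relu (a - 1)) - (relu b - relu (b - 1))\<bar> \<le> \<bar>a - b\<bar>"
  unfolding relu_def by (auto simp: max_def)

lemma clamp_range: "0 \<le> relu a - relu (a - 1)" "relu a - relu (a - 1) \<le> 1"
  unfolding relu_def by (auto simp: max_def)

lemma clamp_id: "0 \<le> a \<Longrightarrow> a \<le> 1 \<Longrightarrow> relu a - relu (a - 1) = a"
  unfolding relu_def by (auto simp: max_def)

lemma SBsum_lip:
  "\<bar>SBsum P k y \<rho> - SBsum P k y' \<rho>'\<bar> \<le> (\<Sum>r0<Suc k. 2 ^ (r0 * P)) * \<bar>y - y'\<bar> + real (Suc k) * \<bar>\<rho> - \<rho>'\<bar>"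
proof -
  have "\<bar>SBsum P k y \<rho> - SBsum P k y' \<rho>'\<bar> = \<bar>\<Sum>r0<Suc k. relu ((tent ^^ (r0 * P)) y - \<bar>\<rho> - real r0\<bar>) - relu ((tent ^^ (r0 * P)) y' - \<bar>\<rho>' - real r0\<bar>)\<bar>"
    unfolding SBsum_def by (simp add: sum_subtractf)
  also have "\<dots> \<le> (\<Sum>r0<Suc k. \<bar>relu ((tent ^^ (r0 * P)) y - \<bar>\<rho> - real r0\<bar>) - relu ((tent ^^ (r0 * P)) y' - \<bar>\<rho>' - real r0\<bar>)\<bar>)"
    by (rule sum_abs)
  also have "\<dots> \<le> (\<Sum>r0<Suc k. 2 ^ (r0 * P) * \<bar>y - y'\<bar> + \<bar>\<rho> - \<rho>'\<bar>)"
  proof (rule sum_mono)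
    fix r0
    have "\<bar>relu ((tent ^^ (r0 * P)) y - \<bar>\<rho> - real r0\<bar>) - relu ((tent ^^ (r0 * P)) y' - \<bar>\<rho>' - real r0\<bar>)\<bar>
        \<le> \<bar>((tent ^^ (r0 * P)) y - \<bar>\<rho> - real r0\<bar>) - ((tent ^^ (r0 * P)) y' - \<bar>\<rho>' - real r0\<bar>)\<bar>"
      by (rule relu_lip)
    also have "\<dots> \<le> \<bar>(tent ^^ (r0 * P)) y - (tent ^^ (r0 * P)) y'\<bar> + \<bar>\<bar>\<rho> - real r0\<bar> - \<bar>\<rho>' - real r0\<bar>\<bar>"
      by linarith
    also have "\<bar>\<bar>\<rho> - real r0\<bar> - \<bar>\<rho>' - real r0\<bar>\<bar> \<le> \<bar>\<rho> - \<rho>'\<bar>" by linarith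
    finally show "\<bar>relu ((tent ^^ (r0 * P)) y - \<bar>\<rho> - real r0\<bar>) - relu ((tent ^^ (r0 * P)) y' - \<bar>\<rho>' - real r0\<bar>)\<bar>
        \<le> 2 ^ (r0 * P) * \<bar>y - y'\<bar> + \<bar>\<rho> - \<rho>'\<bar>" using tent_iter_lip[of "r0 * P" y y'] by linarith
  qed
  also have "\<dots> = (\<Sum>r0<Suc k. 2 ^ (r0 * P)) * \<bar>y - y'\<bar> + real (Suc k) * \<bar>\<rho> - \<rho>'\<bar>"
    by (simp add: sum.distrib sum_distrib_right[symmetric] del: sum.lessThan_Suc)
  finally show ?thesis .
qed

lemma geom_bound: "1 \<le> P \<Longrightarrow> (\<Sum>r<Suc k. (2::real) ^ (r * P)) \<le> 2 * 2 ^ (k * P)"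
proof (induction k)
  case 0 then show ?case by simp
next
  case (Suc k)
  have "(2::real) * 2 ^ (k * P) \<le> 2 ^ (k * P + P)"
  proof -
    have "(2::real) ^ 1 \<le> 2 ^ P" using Suc.prems by (intro power_increasing) auto
    then show ?thesis by (simp add: power_add)
  qed
  then have "(\<Sum>r<Suc (Suc k). (2::real) ^ (r * P)) \<le> 2 ^ (k * P + P) + 2 ^ (Suc k * P)"
    using Suc by simp
  also have "\<dots> = 2 * 2 ^ (Suc k * P)" by (simp add: add.commute)
  finally show ?case .
qed

lemma SBsum_at:
  assumes "0 \<le> y" "y \<le> 1" "\<rho> \<le> k"
  shows "SBsum P k y (real \<rho>) = (tent ^^ (\<rho> * P)) y"
proof -
  have "SBsum P k y (real \<rho>) = relu ((tent ^^ (\<rho> * P)) y - \<bar>real \<rho> - real \<rho>\<bar>)"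
    unfolding SBsum_def
  proof (rule sum_single)
    show "\<rho> \<in> {..<Suc k}" using assms(3) by simp
    fix r assume "r \<in> {..<Suc k}" "r \<noteq> \<rho>"
    then have "1 \<le> \<bar>real \<rho> - real r\<bar>" by (cases "r < \<rho>") auto
    moreover have "(tent ^^ (r * P)) y \<le> 1" using tent_iter_range[OF assms(1,2)] by blast
    ultimately show "relu ((tent ^^ (r * P)) y - \<bar>real \<rho> - real r\<bar>) = 0" by (simp add: relu_neg)
  qed simp
  then show ?thesis using tent_iter_range[OF assms(1,2), of "\<rho> * P"] by (simp add: relu_pos)
qed

lemma clog_bounds:
  fixes n :: nat assumes "n \<ge> 1"
  shows "2 * n \<le> 2 ^ (nat \<lceil>log 2 (2 * real n)\<rceil>)" "1 \<le> nat \<lceil>log 2 (2 * real n)\<rceil>"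
proof -
  have l1: "1 \<le> log 2 (2 * real n)" using assms by (subst le_log_iff) auto
  then have c1: "1 \<le> \<lceil>log 2 (2 * real n)\<rceil>" by linarith
  then show "1 \<le> nat \<lceil>log 2 (2 * real n)\<rceil>" by linarith
  have "2 * real n = 2 powr (log 2 (2 * real n))" using assms by simp
  also have "\<dots> \<le> 2 powr (real_of_int \<lceil>log 2 (2 * real n)\<rceil>)" by (intro powr_mono) auto
  also have "\<dots> = 2 ^ (nat \<lceil>log 2 (2 * real n)\<rceil>)"
    using c1 by (subst powr_realpow[symmetric]) auto
  finally show "2 * n \<le> 2 ^ (nat \<lceil>log 2 (2 * real n)\<rceil>)" by (metis of_nat_le_iff of_nat_mult of_nat_numeral of_nat_power)
qed

lemma two_n_le_pow: "1 \<le> n \<Longrightarrow> 2 * n \<le> 2 ^ (n::nat)"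
proof (induction n)
  case 0 then show ?case by simp
next
  case (Suc n)
  show ?case
  proof (cases "n = 0")
    case False
    then have "2 * n \<le> 2 ^ n" using Suc by simp
    moreover have "2 \<le> (2::nat) ^ n" using False by (metis One_nat_def Suc_leI neq0_conv power_increasing power_one_right zero_less_numeral one_le_numeral)
    ultimately show ?thesis by simp
  qed simp
qed

lemma clog_le:
  fixes n :: nat assumes "n \<ge> 1"
  shows "nat \<lceil>log 2 (2 * real n)\<rceil> \<le> n"
proof -
  have "real (2 * n) \<le> real (2 ^ n)" using two_n_le_pow[OF assms] by (simp only: of_nat_le_iff)
  then have "2 * real n \<le> 2 powr real n" by (simp add: powr_realpow)
  then have "log 2 (2 * real n) \<le> real n" using assms by (subst log_le_iff) auto
  then have "\<lceil>log 2 (2 * real n)\<rceil> \<le> int n" by (simp add: ceiling_le_iff)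
  then show ?thesis by linarith
qed

lemma clog_ge2:
  fixes n :: nat assumes "n \<ge> 2"
  shows "2 \<le> nat \<lceil>log 2 (2 * real n)\<rceil>"
proof -
  have "2 \<le> log 2 (2 * real n)" using assms by (subst le_log_iff) auto
  then show ?thesis by linarith
qed


lemma depth_ok:
  fixes X P :: nat assumes "6 \<le> P" "4 \<le> X"
  shows "2 * X + (2 * Suc (X div P + 1 - 1) + (X div P + 1 - 1) * P) + 1 \<le> 4 * X + 1"
proof -
  define q where "q = X div P"
  have a: "q * P \<le> X" unfolding q_def by simp
  have b: "q * 6 \<le> q * P" using assms(1) by (rule mult_le_mono2)
  have c: "6 * q \<le> X" using a b by linarith
  have e: "X div P + 1 - 1 = q" by (simp add: q_def)
  show ?thesis unfolding e mult_Suc_right using a c assms(2) by linarith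
qed

lemma R_le_L:
  fixes L cL P :: nat assumes "2 * cL \<le> P" "1 \<le> cL" "2 \<le> L"
  shows "L * cL div P + 1 \<le> L"
proof -
  define q where "q = L * cL div P"
  have a: "q * P \<le> L * cL" unfolding q_def by simp
  have "q * (2 * cL) \<le> q * P" using assms(1) by (rule mult_le_mono2)
  moreover have "(2 * q) * cL = q * (2 * cL)" by simp
  ultimately have "(2 * q) * cL \<le> L * cL" using a by linarith
  then have "2 * q \<le> L" using assms(2) by (simp add: mult_le_cancel2)
  then show ?thesis unfolding q_def[symmetric] using assms(3) by linarith
qed

lemma RP_gt: fixes C P :: nat assumes "0 < P" shows "C < (C div P + 1) * P"
proof -
  have e: "P * (C div P) + C mod P = C" by (rule mult_div_mod_eq)
  have m: "C mod P < P" using assms by simp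
  have "(C div P + 1) * P = P * (C div P) + P" by (simp add: algebra_simps)
  then show ?thesis using e m by linarith
qed

lemma capacity:
  fixes W L s cW cL :: nat
  assumes s: "1 \<le> s" and cW: "1 \<le> cW" and cL: "2 \<le> cL" and W: "1 \<le> W" and L: "1 \<le> L"
  defines "A \<equiv> s * (2 * W + 1) * cW"
  defines "P \<equiv> 2 * s * (cW + cL)"
  defines "R \<equiv> L * cL div P + 1"
  defines "N \<equiv> W\<^sup>2 * L\<^sup>2"
  shows "2 * (N div R) \<le> (2 * A - 3) * ((A - 1) * (L * cL))"
proof -
  define C where "C = L * cL"
  define B where "B = A - 1"
  define D where "D = s * W * cW"
  have A_eq: "A = 2 * D + s * cW" unfolding A_def D_def by (simp add: algebra_simps)
  have scw: "1 \<le> s * cW" using s cW by (simp add: one_le_mult_iff)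
  have D1: "1 \<le> D" unfolding D_def using s cW W by (simp add: one_le_mult_iff)
  have DD: "2 * s * W * cW = 2 * D" unfolding D_def by simp
  have Beq: "B = 2 * D + s * cW - 1" using B_def A_eq by simp
  have a1': "2 * D \<le> B" using Beq scw by linarith
  have a1: "2 * s * W * cW \<le> B" by (subst DD) (rule a1')
  have A2: "2 \<le> A" using A_eq D1 scw by linarith
  have a2: "B * B \<le> (2 * A - 3) * B" unfolding B_def using A2 by (intro mult_le_mono) auto
  have a3: "(2 * s * W * cW) * (2 * s * W * cW) \<le> B * B" by (rule mult_le_mono[OF a1 a1])
  have cc: "2 \<le> cW * cL" using cW cL by (metis mult_le_mono nat_mult_1)
  have a4: "cW + cL \<le> (cW * cL) * (cW * cL)"
  proof -
    have x1: "cW * 1 \<le> cW * cL" using cL by (intro mult_le_mono2) simp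
    have x2: "1 * cL \<le> cW * cL" using cW by (intro mult_le_mono1) simp
    have "cW + cL \<le> cW * cL + cW * cL" using add_mono[OF x1 x2] by simp
    also have "\<dots> = 2 * (cW * cL)" by simp
    also have "\<dots> \<le> (cW * cL) * (cW * cL)" using cc by (intro mult_right_mono) auto
    finally show ?thesis .
  qed
  have a4': "cW + cL \<le> s * ((cW * cL) * (cW * cL))" using a4 s by (metis le_trans mult_le_mono1 nat_mult_1)
  have a5: "2 * N * P \<le> B * B * C * C"
  proof -
    have "2 * N * P = (4 * s * W * W * L * L) * (cW + cL)" unfolding N_def P_def by (simp add: power2_eq_square algebra_simps)
    also have "\<dots> \<le> (4 * s * W * W * L * L) * (s * ((cW * cL) * (cW * cL)))" using a4' by (rule mult_left_mono) simp
    also have "\<dots> = ((2 * s * W * cW) * (2 * s * W * cW)) * (C * C)" unfolding C_def by (simp add: algebra_simps)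
    also have "\<dots> \<le> (B * B) * (C * C)" using a3 by (rule mult_right_mono) simp
    finally show ?thesis by (simp add: mult.assoc)
  qed
  have Ppos: "0 < P" unfolding P_def using s cW by simp
  have a6: "C < R * P" unfolding C_def R_def using RP_gt[OF Ppos] by simp
  have Bpos: "0 < B" using a1' D1 by linarith
  have Cpos: "0 < C" unfolding C_def using L cL by simp
  have a7: "B * B * C * C < B * B * C * (R * P)" using a6 Bpos Cpos by simp
  have e: "B * B * C * (R * P) = (B * B * C * R) * P" by (simp only: mult.assoc)
  have "2 * N * P < B * B * C * (R * P)" by (rule le_less_trans[OF a5 a7])
  then have "(2 * N) * P < (B * B * C * R) * P" unfolding e .
  then have a8: "2 * N < B * B * C * R" by (simp only: mult_less_cancel2)
  have a9: "2 * (N div R) * R \<le> 2 * N" by simp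
  have q3: "(B * B) * (C * R) \<le> ((2 * A - 3) * B) * (C * R)" using a2 by (rule mult_right_mono) simp
  have e1: "B * B * C * R = (B * B) * (C * R)" by (simp only: mult.assoc)
  have e2: "((2 * A - 3) * B) * (C * R) = ((2 * A - 3) * (B * C)) * R" by (simp only: mult.assoc)
  have "2 * (N div R) * R < ((2 * A - 3) * (B * C)) * R"
    using le_less_trans[OF a9 a8] q3 unfolding e1 e2 by (rule less_le_trans)
  then have "2 * (N div R) < (2 * A - 3) * (B * C)" by (simp only: mult_less_cancel2)
  then show ?thesis unfolding B_def C_def by simp
qed



lemma aff_sel4: "length y = 4 \<Longrightarrow>
  aff 4 3 (\<lambda>i j. if i = 0 then (if j = 1 then 1 else 0) else if i = 1 then (if j = 2 \<or> j = 3 then 1 else 0) else 0) (\<lambda>_. 0) y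
   = [y!1, y!2 + y!3, 0]"
  by (rule nth_equalityI) (auto simp: eval_nat_numeral less_Suc_eq)

theorem proposition31:
  fixes W L s :: nat and \<xi> :: "nat \<Rightarrow> real"
  assumes "W \<ge> 6" and "L \<ge> 2"
    and "\<And>i. i < W\<^sup>2 * L\<^sup>2 \<Longrightarrow> \<xi> i \<in> {0..1}"
  shows "\<exists>\<phi>. \<phi> \<in> NN (8 * s * (2 * W + 1) * nat \<lceil>log 2 (2 * real W)\<rceil> + 2)
                    (4 * L * nat \<lceil>log 2 (2 * real L)\<rceil> + 1) \<and>
             (4 * 2 ^ (L\<^sup>2) + 2 * real L ^ 2)-lipschitz_on UNIV \<phi> \<and>
             (\<forall>i < W\<^sup>2 * L\<^sup>2. \<bar>\<phi> (real i) - \<xi> i\<bar> \<le> 1 / real (W * L) ^ (2 * s)) \<and>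
             (\<forall>t. \<phi> t \<in> {0..1})"
proof (cases "s = 0")
  case True
  have "rz 1 0 (8 * s * (2 * W + 1) * nat \<lceil>log 2 (2 * real W)\<rceil> + 2) 1 (aff 1 1 (\<lambda>_ _. 0) (\<lambda>_. 0))"
    by (rule rz_aff)
  then have "(\<lambda>t. hd (aff 1 1 (\<lambda>_ _. 0) (\<lambda>_. 0) [t])) \<in> NN (8 * s * (2 * W + 1) * nat \<lceil>log 2 (2 * real W)\<rceil> + 2)
                    (4 * L * nat \<lceil>log 2 (2 * real L)\<rceil> + 1)"
    by (rule rz_NN) simp
  moreover have "(\<lambda>t. hd (aff 1 1 (\<lambda>_ _. 0) (\<lambda>_. 0) [t])) = (\<lambda>t. 0)" by (simp add: aff_def)
  ultimately have NN0: "(\<lambda>t::real. 0::real) \<in> NN (8 * s * (2 * W + 1) * nat \<lceil>log 2 (2 * real W)\<rceil> + 2)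
                    (4 * L * nat \<lceil>log 2 (2 * real L)\<rceil> + 1)" by simp
  show ?thesis
  proof (intro exI[of _ "\<lambda>t. 0"] conjI allI impI NN0)
    show "(4 * 2 ^ (L\<^sup>2) + 2 * real L ^ 2)-lipschitz_on UNIV (\<lambda>t::real. 0::real)"
      by (rule lipschitz_onI) auto
    fix i assume "i < W\<^sup>2 * L\<^sup>2"
    then show "\<bar>0 - \<xi> i\<bar> \<le> 1 / real (W * L) ^ (2 * s)" using assms(3)[of i] True by auto
  qed auto
next
  case False
  then have s1: "1 \<le> s" by simp
  define cW where "cW = nat \<lceil>log 2 (2 * real W)\<rceil>"
  define cL where "cL = nat \<lceil>log 2 (2 * real L)\<rceil>"
  define A where "A = s * (2 * W + 1) * cW"
  define J where "J = A - 1"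
  define K where "K = 2 * A - 3"
  define C where "C = L * cL"
  define P where "P = 2 * s * (cW + cL)"
  define R where "R = L * cL div P + 1"
  define N where "N = W\<^sup>2 * L\<^sup>2"
  define Nb where "Nb = N div R + 1"
  define Wb where "Wb = 8 * s * (2 * W + 1) * cW + 2"
  define \<xi>' where "\<xi>' i = (if i < N then \<xi> i else 0)" for i
  have W1: "1 \<le> W" and L1: "1 \<le> L" using assms(1,2) by auto
  have cW1: "1 \<le> cW" and cWp: "2 * W \<le> 2 ^ cW" using clog_bounds[OF W1] unfolding cW_def by auto
  have cL2: "2 \<le> cL" using clog_ge2[OF assms(2)] unfolding cL_def .
  have cLL: "cL \<le> L" using clog_le[OF L1] unfolding cL_def .
  have cLp: "2 * L \<le> 2 ^ cL" using clog_bounds[OF L1] unfolding cL_def by auto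
  have R1: "1 \<le> R" unfolding R_def by simp
  have c3: "3 \<le> cW + cL" using cW1 cL2 by simp
  have "2 * 3 \<le> (2 * s) * (cW + cL)" using s1 c3 by (intro mult_le_mono) auto
  then have P6: "6 \<le> P" unfolding P_def by simp
  have A2: "2 \<le> A"
  proof -
    have "1 * 13 * 1 \<le> s * (2 * W + 1) * cW" using s1 cW1 assms(1) by (intro mult_le_mono) auto
    then show ?thesis unfolding A_def by simp
  qed
  have K1: "1 \<le> K" unfolding K_def using A2 by simp
  have cap: "2 * (Nb - 1) \<le> K * (J * C)"
    using capacity[OF s1 cW1 cL2 W1 L1] unfolding K_def J_def C_def Nb_def N_def R_def P_def A_def by simp
  have dep: "2 * C + (2 * Suc (R - 1) + (R - 1) * P) + 1 \<le> 4 * L * cL + 1"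
  proof -
    have "4 \<le> L * cL" using assms(2) cL2 by (metis mult_le_mono numeral_Bit0 mult_2 one_add_one)
    from depth_ok[OF P6 this] show ?thesis unfolding C_def R_def by simp
  qed
  have RL: "R \<le> L"
  proof -
    have "2 * cL \<le> P" unfolding P_def using s1 by (metis add_le_mono le_add2 mult_le_mono mult_2 nat_mult_1 mult.commute)
    from R_le_L[OF this _ assms(2)] cL2 show ?thesis unfolding R_def by simp
  qed
  have RP: "(R - 1) * P \<le> L * cL" unfolding R_def by simp
  have \<xi>'r: "0 \<le> \<xi>' i \<and> \<xi>' i \<le> 1" for i using assms(3)[of i] unfolding \<xi>'_def N_def by auto
  have "\<forall>m. \<exists>x. 0 \<le> x \<and> x \<le> 1 \<and> (\<forall>\<rho>\<le>R - 1. \<bar>(tent ^^ (\<rho> * P)) x - \<xi>' (m * R + \<rho>)\<bar> \<le> 1 / 2 ^ P)"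
  proof
    fix m show "\<exists>x. 0 \<le> x \<and> x \<le> 1 \<and> (\<forall>\<rho>\<le>R - 1. \<bar>(tent ^^ (\<rho> * P)) x - \<xi>' (m * R + \<rho>)\<bar> \<le> 1 / 2 ^ P)"
      by (rule tent_encode) (use \<xi>'r in auto)
  qed
  then obtain xs where xs: "\<And>m. 0 \<le> xs m \<and> xs m \<le> 1"
    "\<And>m \<rho>. \<rho> \<le> R - 1 \<Longrightarrow> \<bar>(tent ^^ (\<rho> * P)) (xs m) - \<xi>' (m * R + \<rho>)\<bar> \<le> 1 / 2 ^ P"
    by metis
  interpret H: hinge "tauf R" K
    by unfold_locales (use tauf_gap[OF R1] K1 in auto)
  define wA where "wA = max (4 * J) (2 * K + 2) + 4"
  have wA: "wA + wA \<le> Wb" "8 \<le> Wb"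
  proof -
    have "4 * J = 4 * A - 4" "2 * K + 2 = 4 * A - 4" unfolding J_def K_def using A2 by auto
    then have "wA = 4 * A" unfolding wA_def using A2 by simp
    moreover have "Wb = 8 * A + 2" unfolding Wb_def A_def by (simp add: mult.assoc)
    ultimately show "wA + wA \<le> Wb" by linarith
    have "8 * 1 * 1 * 1 \<le> 8 * s * (2 * W + 1) * cW" using s1 cW1 by (intro mult_le_mono) auto
    then show "8 \<le> Wb" unfolding Wb_def by simp
  qed
  define Fx where "Fx = (\<lambda>x::real list. [x!0, xs 0 + (\<Sum>q<K*(J*C). aX Nb xs q * relu (x!0 - tauf R q))])"
  define Fr where "Fr = (\<lambda>x::real list. [x!0, 0 + (\<Sum>q<K*(J*C). aR R Nb q * relu (x!0 - tauf R q))])"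
  have SAx: "rz 1 (2*C) wA 2 Fx" unfolding Fx_def wA_def by (rule H.stageA)
  have SAr: "rz 1 (2*C) wA 2 Fr" unfolding Fr_def wA_def by (rule H.stageA)
  have Par: "rz 1 (2*C) Wb 4 (\<lambda>x. Fx x @ Fr x)"
    by (rule rz_mono[OF rz_par3[OF SAx SAr] wA(1)]) simp
  define Amat where "Amat = (\<lambda>i j. if i = 0 then (if j = 1 then 1 else 0) else if i = (1::nat) then (if j = 2 \<or> j = (3::nat) then 1 else 0) else (0::real))"
  define SBf where "SBf = (\<lambda>x::real list. [(tent ^^ ((R - 1) * P)) (x!0), x!1, x!2 + SBsum P (R - 1) (x!0) (x!1)])"
  have SBn: "rz 3 (2 * Suc (R - 1) + (R - 1) * P) 8 3 SBf" unfolding SBf_def by (rule SB_net)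
  have SBp: "rz 4 (2 * Suc (R - 1) + (R - 1) * P) Wb 3 (\<lambda>y. SBf (aff 4 3 Amat (\<lambda>_. 0) y))"
    by (rule rz_mono[OF rz_pre_aff[OF SBn] wA(2)])
  have Fin: "rz 3 1 Wb 1 (\<lambda>x. [relu (x!2) - relu (x!2 - 1)])"
    by (rule rz_mono[OF final_layer wA(2)])
  define Ffull where "Ffull = (\<lambda>x. (\<lambda>z. [relu (z!2) - relu (z!2 - 1)]) (SBf (aff 4 3 Amat (\<lambda>_. 0) (Fx x @ Fr x))))"
  have Net: "rz 1 (2 * C + (2 * Suc (R - 1) + (R - 1) * P) + 1) Wb 1 Ffull"
    unfolding Ffull_def by (rule rz_comp[OF rz_comp[OF Par SBp] Fin])
  define \<phi> where "\<phi> = (\<lambda>t. hd (Ffull [t]))"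
  have NNphi: "\<phi> \<in> NN Wb (4 * L * cL + 1)" unfolding \<phi>_def by (rule rz_NN[OF Net dep])
  define Sf where "Sf = (\<lambda>t. SBsum P (R - 1) (Xf R Nb xs t) (rf R Nb t))"
  have phi_eq: "\<phi> t = relu (Sf t) - relu (Sf t - 1)" for t
  proof -
    have hx: "xs 0 + (\<Sum>q<K*(J*C). aX Nb xs q * relu (t - tauf R q)) = Xf R Nb xs t" by (rule hinge_X[OF cap])
    have hr: "t + (\<Sum>q<K*(J*C). aR R Nb q * relu (t - tauf R q)) = rf R Nb t" by (rule hinge_R[OF cap])
    have l4: "length (Fx [t] @ Fr [t]) = 4" by (simp add: Fx_def Fr_def)
    have "aff 4 3 Amat (\<lambda>_. 0) (Fx [t] @ Fr [t]) = [Xf R Nb xs t, rf R Nb t, 0]"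
      unfolding Amat_def aff_sel4[OF l4] by (simp add: Fx_def Fr_def hx hr[symmetric])
    then show ?thesis unfolding \<phi>_def Ffull_def by (simp add: SBf_def Sf_def)
  qed
  have Xr: "0 \<le> Xf R Nb xs t \<and> Xf R Nb xs t \<le> 1" for t by (rule X_range[OF R1 xs(1)])
  have Sf_lip: "\<bar>Sf x - Sf y\<bar> \<le> (4 * 2 ^ (L\<^sup>2) + 2 * real L ^ 2) * \<bar>x - y\<bar>" for x y
  proof -
    define G where "G = (\<Sum>r0<Suc (R - 1). (2::real) ^ (r0 * P))"
    define D where "D = \<bar>x - y\<bar>"
    have D0: "0 \<le> D" unfolding D_def by simp
    have G0: "0 \<le> G" unfolding G_def by (intro sum_nonneg) auto
    have GB: "G \<le> 2 * 2 ^ ((R - 1) * P)" unfolding G_def using P6 by (intro geom_bound) simp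
    have "(R - 1) * P \<le> L\<^sup>2"
    proof -
      have "L * cL \<le> L * L" using cLL by simp
      from le_trans[OF RP this] show ?thesis by (simp add: power2_eq_square)
    qed
    then have "(2::real) ^ ((R - 1) * P) \<le> 2 ^ (L\<^sup>2)" by (intro power_increasing) auto
    then have GB2: "G \<le> 2 * 2 ^ (L\<^sup>2)" using GB by linarith
    have RR: "real (Suc (R - 1)) = real R" using R1 by simp
    have "\<bar>Sf x - Sf y\<bar> \<le> G * \<bar>Xf R Nb xs x - Xf R Nb xs y\<bar> + real R * \<bar>rf R Nb x - rf R Nb y\<bar>"
      unfolding Sf_def G_def using SBsum_lip[of P "R - 1"] RR by metis
    also have "\<dots> \<le> G * (2 * D) + real R * ((2 * real R - 1) * D)"
      using X_lip[OF R1 xs(1), where Nb=Nb and t=x and s=y] r_lip[OF R1, where Nb=Nb and t=x and s=y] G0 unfolding D_def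
      by (intro add_mono mult_left_mono) auto
    also have "\<dots> \<le> (2 * 2 ^ (L\<^sup>2)) * (2 * D) + 2 * real L ^ 2 * D"
    proof (rule add_mono)
      show "G * (2 * D) \<le> (2 * 2 ^ (L\<^sup>2)) * (2 * D)" using GB2 D0 by (intro mult_right_mono) auto
      have "real R \<le> real L" using RL by simp
      then have "real R * (2 * real R - 1) \<le> real L * (2 * real L)" using R1 by (intro mult_mono) auto
      then have "real R * (2 * real R - 1) * D \<le> 2 * real L ^ 2 * D" using D0
        by (intro mult_right_mono) (auto simp: power2_eq_square)
      then show "real R * ((2 * real R - 1) * D) \<le> 2 * real L ^ 2 * D" by (simp add: mult.assoc)
    qed
    also have "\<dots> = (4 * 2 ^ (L\<^sup>2) + 2 * real L ^ 2) * D" by (simp add: algebra_simps)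
    finally show ?thesis unfolding D_def .
  qed
  show ?thesis
  proof (intro exI[of _ \<phi>] conjI allI impI)
    show "\<phi> \<in> NN (8 * s * (2 * W + 1) * nat \<lceil>log 2 (2 * real W)\<rceil> + 2) (4 * L * nat \<lceil>log 2 (2 * real L)\<rceil> + 1)"
      using NNphi unfolding Wb_def cW_def cL_def .
    show "(4 * 2 ^ (L\<^sup>2) + 2 * real L ^ 2)-lipschitz_on UNIV \<phi>"
    proof (rule lipschitz_onI)
      fix x y :: real
      have "\<bar>\<phi> x - \<phi> y\<bar> \<le> \<bar>Sf x - Sf y\<bar>" unfolding phi_eq by (rule clamp_lip)
      also have "\<dots> \<le> (4 * 2 ^ (L\<^sup>2) + 2 * real L ^ 2) * \<bar>x - y\<bar>" by (rule Sf_lip)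
      finally show "dist (\<phi> x) (\<phi> y) \<le> (4 * 2 ^ (L\<^sup>2) + 2 * real L ^ 2) * dist x y" by (simp add: dist_real_def)
    qed simp
  next
    fix t show "\<phi> t \<in> {0..1}" unfolding phi_eq using clamp_range by auto
  next
    fix i assume i: "i < W\<^sup>2 * L\<^sup>2"
    define m where "m = i div R"
    define \<rho> where "\<rho> = i mod R"
    have ie: "i = m * R + \<rho>" unfolding m_def \<rho>_def by simp
    have \<rho>R: "\<rho> < R" unfolding \<rho>_def using R1 by simp
    have mNb: "m < Nb" unfolding m_def Nb_def using i unfolding N_def by (simp add: div_le_mono le_imp_less_Suc)
    have dp: "Xf R Nb xs (real i) = xs m" "rf R Nb (real i) = real \<rho>"
      using data_point(1)[OF mNb \<rho>R R1, of xs] data_point(2)[OF mNb \<rho>R R1] ie by simp_all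
    have \<rho>k: "\<rho> \<le> R - 1" using \<rho>R by simp
    have Sv: "Sf (real i) = (tent ^^ (\<rho> * P)) (xs m)"
      unfolding Sf_def dp using SBsum_at[OF _ _ \<rho>k] xs(1)[of m] by simp
    have Tr: "0 \<le> (tent ^^ (\<rho> * P)) (xs m) \<and> (tent ^^ (\<rho> * P)) (xs m) \<le> 1"
      using tent_iter_range xs(1)[of m] by blast
    have ph: "\<phi> (real i) = (tent ^^ (\<rho> * P)) (xs m)" unfolding phi_eq Sv using Tr clamp_id by blast
    have "\<xi>' (m * R + \<rho>) = \<xi> i" unfolding \<xi>'_def using i ie N_def by simp
    then have err: "\<bar>\<phi> (real i) - \<xi> i\<bar> \<le> 1 / 2 ^ P" using xs(2)[OF \<rho>k, of m] ph by simp
    have "real (W * L) ^ (2 * s) \<le> 2 ^ P"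
    proof -
      have "W * L \<le> 2 ^ cW * 2 ^ cL" using cWp cLp by (intro mult_le_mono) auto
      then have "real (W * L) \<le> real (2 ^ cW * 2 ^ cL)" by (simp only: of_nat_le_iff)
      then have "real (W * L) \<le> 2 ^ (cW + cL)" by (simp add: power_add)
      then have "real (W * L) ^ (2 * s) \<le> (2 ^ (cW + cL)) ^ (2 * s)" by (intro power_mono) auto
      also have "\<dots> = 2 ^ P" unfolding P_def by (simp add: power_mult[symmetric] mult.commute)
      finally show ?thesis .
    qed
    moreover have "0 < real (W * L) ^ (2 * s)" using W1 L1 by simp
    ultimately have "1 / 2 ^ P \<le> 1 / real (W * L) ^ (2 * s)" by (intro divide_left_mono) auto
    then show "\<bar>\<phi> (real i) - \<xi> i\<bar> \<le> 1 / real (W * L) ^ (2 * s)" using err by linarith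
  qed
qed


end
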